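(* Consider a weighted ensemble method with $N$ particles (as defined in the context). Fix $T\ge1$ and a measurable $f:X\to\mathbb R$ with $\mu_0K^t|f|<\infty$ for $0\le t\le T-1$, and suppose $\mu(|f|)<\infty$. For $0\le t\le T-1$ define $$Y_t=\mathbb E\Big[\frac1T\sum_{s=0}^{T-1}\sum_{i=1}^Nw_s^if(\xi_s^i)\,\Big|\,\mathcal F_t\Big],\qquad \hat Y_t=\mathbb E\Big[\frac1T\sum_{s=0}^{T-1}\sum_{i=1}^Nw_s^if(\xi_s^i)\,\Big|\,\hat{\mathcal F}_t\Big],$$ and for $0\le t\le T$ let $h_t^T=\sum_{s=t}^{T-1}K^{s-t}(f-\mu(f))$ (so $h_T^T=0$). Then $Y_0,\hat Y_0,Y_1,\hat Y_1,\dots,\hat Y_{T-2},Y_{T-1}$ is a martingale and, for $0\le t\le T-2$, $$\hat Y_t-Y_t=\frac1T\Big[\sum_{i=1}^N\hat w_t^i\,Kh_{t+1}^T(\hat\xi_t^i)-\sum_{i=1}^Nw_t^i\,Kh_{t+1}^T(\xi_t^i)\Big],$$ $$Y_{t+1}-\hat Y_t=\frac1T\sum_{i=1}^N\hat w_t^i\Big(h_{t+1}^T(\xi_{t+1}^i)-Kh_{t+1}^T(\hat\xi_t^i)\Big).$$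
   Context: Splitting method: Let $K$ be a Markov transition kernel on a measurable state space $X$ with invariant probability $\mu$, and $\mu_0$ a probability distribution on $X$. A splitting method produces, for $t=0,1,2,\dots$, particles $\xi_t^1,\dots,\xi_t^{N_t}\in X$ with weights $w_t^1,\dots,w_t^{N_t}\ge 0$, together with a filtration $\mathcal F_0\subseteq\hat{\mathcal F}_0\subseteq\mathcal F_1\subseteq\hat{\mathcal F}_1\subseteq\cdots$, as follows. Initially $\xi_0^1,\dots,\xi_0^{N_0}$ are i.i.d. with law $\mu_0$ and $w_0^i=1/N_0$. At each time $t\ge 0$: (Splitting step) for each $i$ a number $C_t^i>0$ is chosen, where $(\xi_t^i,w_t^i,C_t^i)_{1\le i\le N_t}$ is $\mathcal F_t$-measurable; random nonnegative integers $N_t^i$ are drawn with $\mathbb E[N_t^i\mid\mathcal F_t]=C_t^i$; each $\xi_t^i$ is replaced by $N_t^i$ copies, each with weight $w_t^i/C_t^i$; the resulting children are listed as $(\hat\xi_t^j,\hat w_t^j)_{1\le j\le N_{t+1}}$ with $N_{t+1}=\sum_i N_t^i$, and they are $\hat{\mathcal F}_t$-measurable. (Evolution step) conditional on $\hat{\mathcal F}_t$, the particles $\xi_{t+1}^1,\dots,\xi_{t+1}^{N_{t+1}}$ are independent with $\xi_{t+1}^j\sim K(\hat\xi_t^j,\cdot)$, and $w_{t+1}^j=\hat w_t^j$. Weighted ensemble (WE) method: a splitting method in which at each time $t$ the splitting step is: the indices $1,\dots,N_t$ are partitioned ($\mathcal F_t$-measurably) into bins $u$, with $w_t(u)=\sum_{i\in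 u}w_t^i$; integers $N_t(u)\ge1$ are chosen ($\mathcal F_t$-measurably); for $i\in u$, $C_t^i=N_t(u)w_t^i/w_t(u)$; the $N_t^i$ satisfy $\mathbb E[N_t^i\mid\mathcal F_t]=C_t^i$ and $\sum_{i\in u}N_t^i=N_t(u)$ almost surely; and every child of a parent in bin $u$ receives weight $w_t(u)/N_t(u)$. A WE method with $N$ particles has $N_0=N$ and $\sum_uN_t(u)=N$ for all $t$, so $N_t=N$ for all $t$ (and $\sum_i w_t^i=1$ for all $t$). *)

theory Defs
  imports "HOL-Probability.Probability"
begin

definition kernel_app :: "('x \<Rightarrow> 'x measure) \<Rightarrow> ('x \<Rightarrow> real) \<Rightarrow> 'x \<Rightarrow> real" where
  "kernel_app K g x = (\<integral>y. g y \<partial>(K x))"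

definition kernel_pow :: "('x \<Rightarrow> 'x measure) \<Rightarrow> nat \<Rightarrow> ('x \<Rightarrow> real) \<Rightarrow> 'x \<Rightarrow> real" where
  "kernel_pow K n g = (kernel_app K ^^ n) g"

definition meas_kpow :: "'x measure \<Rightarrow> ('x \<Rightarrow> 'x measure) \<Rightarrow> nat \<Rightarrow> 'x measure" where
  "meas_kpow \<mu>0 K t = ((\<lambda>\<nu>. \<nu> \<bind> K) ^^ t) \<mu>0"

definition hT :: "('x \<Rightarrow> 'x measure) \<Rightarrow> 'x measure \<Rightarrow> ('x \<Rightarrow> real) \<Rightarrow> nat \<Rightarrow> nat \<Rightarrow> 'x \<Rightarrow> real" where
  "hT K \<mu> f T t x = (\<Sum>s\<in>{t..<T}. kernel_pow K (s - t) (\<lambda>y. f y - (\<integral>z. f z \<partial>\<mu>)) x)"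

definition martingale_upto ::
  "'a measure \<Rightarrow> (nat \<Rightarrow> 'a measure) \<Rightarrow> (nat \<Rightarrow> 'a \<Rightarrow> real) \<Rightarrow> nat \<Rightarrow> bool" where
  "martingale_upto M G Z n \<longleftrightarrow>
     (\<forall>k\<le>n. subalgebra M (G k)) \<and>
     (\<forall>k<n. subalgebra (G (Suc k)) (G k)) \<and>
     (\<forall>k\<le>n. integrable M (Z k) \<and> Z k \<in> borel_measurable (G k)) \<and>
     (\<forall>k<n. AE \<omega> in M. real_cond_exp M (G k) (Z (Suc k)) \<omega> = Z k \<omega>)"

text \<open>Weighted ensemble method with N particles (indices 0..N-1).
  xi t i, w t i: particles/weights at time t; xih t j, wh t j: children after splitting at time t;
  C t i: the numbers C_t^i; Nsp t i: the offspring numbers N_t^i; par t j: parent of child j;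
  bin t i: label of the bin containing index i at time t; Nb t u: the number N_t(u).\<close>
definition WE_method ::
  "'a measure \<Rightarrow> 'x measure \<Rightarrow> ('x \<Rightarrow> 'x measure) \<Rightarrow> 'x measure \<Rightarrow> nat
   \<Rightarrow> (nat \<Rightarrow> 'a measure) \<Rightarrow> (nat \<Rightarrow> 'a measure)
   \<Rightarrow> (nat \<Rightarrow> nat \<Rightarrow> 'a \<Rightarrow> 'x) \<Rightarrow> (nat \<Rightarrow> nat \<Rightarrow> 'a \<Rightarrow> real)
   \<Rightarrow> (nat \<Rightarrow> nat \<Rightarrow> 'a \<Rightarrow> 'x) \<Rightarrow> (nat \<Rightarrow> nat \<Rightarrow> 'a \<Rightarrow> real)
   \<Rightarrow> (nat \<Rightarrow> nat \<Rightarrow> 'a \<Rightarrow> real) \<Rightarrow> (nat \<Rightarrow> nat \<Rightarrow> 'a \<Rightarrow> nat) \<Rightarrow> (nat \<Rightarrow> nat \<Rightarrow> 'a \<Rightarrow> nat)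
   \<Rightarrow> (nat \<Rightarrow> nat \<Rightarrow> 'a \<Rightarrow> nat) \<Rightarrow> (nat \<Rightarrow> nat \<Rightarrow> 'a \<Rightarrow> nat) \<Rightarrow> bool" where
  "WE_method M X K \<mu>0 N F Fh xi w xih wh C Nsp par bin Nb \<longleftrightarrow>
     \<comment> \<open>filtration F_0 \<subseteq> Fh_0 \<subseteq> F_1 \<subseteq> Fh_1 \<subseteq> ... of sub-sigma-algebras\<close>
     (\<forall>t. subalgebra M (F t) \<and> subalgebra M (Fh t) \<and>
          subalgebra (Fh t) (F t) \<and> subalgebra (F (Suc t)) (Fh t)) \<and>
     \<comment> \<open>initialisation: i.i.d. with law mu0, weights 1/N\<close>
     prob_space.indep_vars M (\<lambda>_. X) (xi 0) {..<N} \<and>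
     (\<forall>i<N. distr M X (xi 0 i) = \<mu>0) \<and>
     (\<forall>i<N. \<forall>\<omega>\<in>space M. w 0 i \<omega> = 1 / real N) \<and>
     \<comment> \<open>splitting step: (xi_t^i, w_t^i, C_t^i) are F_t-measurable, w \<ge> 0, C > 0\<close>
     (\<forall>t. \<forall>i<N. xi t i \<in> measurable (F t) X \<and> w t i \<in> borel_measurable (F t)
              \<and> C t i \<in> borel_measurable (F t)
              \<and> (\<forall>\<omega>\<in>space M. w t i \<omega> \<ge> 0 \<and> C t i \<omega> > 0)) \<and>
     \<comment> \<open>WE bins and the numbers N_t(u), chosen F_t-measurably\<close>
     (\<forall>t. \<forall>i<N. bin t i \<in> measurable (F t) (count_space UNIV)) \<and>
     (\<forall>t u. Nb t u \<in> measurable (F t) (count_space UNIV)) \<and>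
     (\<forall>t. \<forall>\<omega>\<in>space M. \<forall>u\<in>(\<lambda>i. bin t i \<omega>) ` {..<N}. Nb t u \<omega> \<ge> 1) \<and>
     (\<forall>t. \<forall>\<omega>\<in>space M. (\<Sum>u\<in>(\<lambda>i. bin t i \<omega>) ` {..<N}. Nb t u \<omega>) = N) \<and>
     (\<forall>t. \<forall>i<N. \<forall>\<omega>\<in>space M.
        C t i \<omega> = real (Nb t (bin t i \<omega>) \<omega>) * w t i \<omega> /
                   (\<Sum>k\<in>{k. k < N \<and> bin t k \<omega> = bin t i \<omega>}. w t k \<omega>)) \<and>
     \<comment> \<open>random offspring numbers with E[N_t^i | F_t] = C_t^i\<close>
     (\<forall>t. \<forall>i<N. Nsp t i \<in> measurable M (count_space UNIV)
              \<and> integrable M (\<lambda>\<omega>. real (Nsp t i \<omega>))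
              \<and> (AE \<omega> in M. real_cond_exp M (F t) (\<lambda>\<omega>. real (Nsp t i \<omega>)) \<omega> = C t i \<omega>)) \<and>
     \<comment> \<open>sum of offspring in each bin u equals N_t(u) almost surely\<close>
     (\<forall>t. AE \<omega> in M. \<forall>u\<in>(\<lambda>i. bin t i \<omega>) ` {..<N}.
          (\<Sum>i\<in>{i. i < N \<and> bin t i \<omega> = u}. Nsp t i \<omega>) = Nb t u \<omega>) \<and>
     \<comment> \<open>children: each parent i is replaced by N_t^i copies with weight w_t^i/C_t^i
        (= w_t(u)/N_t(u) for its bin u)\<close>
     (\<forall>t. AE \<omega> in M. (\<forall>j<N. par t j \<omega> < N) \<and>
          (\<forall>i<N. card {j. j < N \<and> par t j \<omega> = i} = Nsp t i \<omega>) \<and>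
          (\<forall>j<N. xih t j \<omega> = xi t (par t j \<omega>) \<omega>
                 \<and> wh t j \<omega> = w t (par t j \<omega>) \<omega> / C t (par t j \<omega>) \<omega>
                 \<and> wh t j \<omega> = (\<Sum>k\<in>{k. k < N \<and> bin t k \<omega> = bin t (par t j \<omega>) \<omega>}. w t k \<omega>)
                              / real (Nb t (bin t (par t j \<omega>) \<omega>) \<omega>))) \<and>
     \<comment> \<open>children are Fh_t-measurable\<close>
     (\<forall>t. \<forall>j<N. xih t j \<in> measurable (Fh t) X \<and> wh t j \<in> borel_measurable (Fh t)) \<and>
     \<comment> \<open>evolution step: conditionally on Fh_t the xi_{t+1}^j are independent,
        xi_{t+1}^j ~ K(xih_t^j, .), and w_{t+1}^j = wh_t^j\<close>
     (\<forall>t A. (\<forall>j<N. A j \<in> sets X) \<longrightarrow>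
        (AE \<omega> in M. real_cond_exp M (Fh t)
                       (\<lambda>\<omega>. \<Prod>j<N. indicator (A j) (xi (Suc t) j \<omega>)) \<omega>
                     = (\<Prod>j<N. measure (K (xih t j \<omega>)) (A j)))) \<and>
     (\<forall>t. \<forall>j<N. \<forall>\<omega>\<in>space M. w (Suc t) j \<omega> = wh t j \<omega>)"

end

theory Submission
  imports Defs
begin

lemma fiber_sum:
  fixes \<psi> :: "nat \<Rightarrow> 'b::comm_semiring_1"
  assumes "\<And>j. j < N \<Longrightarrow> par j < N"
  shows "(\<Sum>j<N. \<psi> (par j)) = (\<Sum>i<N. of_nat (card {j. j < N \<and> par j = i}) * \<psi> i)"
proof -
  have "(\<Sum>j<N. \<psi> (par j)) = (\<Sum>i<N. \<Sum>j\<in>{x\<in>{..<N}. par x = i}. \<psi> (par j))"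
    by (rule sum.group[symmetric]) (use assms in auto)
  also have "\<dots> = (\<Sum>i<N. of_nat (card {j. j < N \<and> par j = i}) * \<psi> i)"
  proof (rule sum.cong[OF refl])
    fix i assume "i \<in> {..<N}"
    have "(\<Sum>j\<in>{x\<in>{..<N}. par x = i}. \<psi> (par j)) = (\<Sum>j\<in>{x\<in>{..<N}. par x = i}. \<psi> i)"
      by (rule sum.cong) auto
    also have "\<dots> = of_nat (card {x\<in>{..<N}. par x = i}) * \<psi> i" by simp
    finally have e: "(\<Sum>j\<in>{x\<in>{..<N}. par x = i}. \<psi> (par j)) = of_nat (card {x\<in>{..<N}. par x = i}) * \<psi> i" .
    have "{x\<in>{..<N}. par x = i} = {j. j < N \<and> par j = i}" by auto
    then show "(\<Sum>j\<in>{x\<in>{..<N}. par x = i}. \<psi> (par j)) = of_nat (card {j. j < N \<and> par j = i}) * \<psi> i"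
      using e by simp
  qed
  finally show ?thesis .
qed

lemma group_weights:
  fixes w wh :: "nat \<Rightarrow> real" and Nsp par bin Nb :: "nat \<Rightarrow> nat"
  assumes par: "\<And>j. j < N \<Longrightarrow> par j < N"
    and card: "\<And>i. i < N \<Longrightarrow> card {j. j < N \<and> par j = i} = Nsp i"
    and wh: "\<And>j. j < N \<Longrightarrow> wh j = (\<Sum>k\<in>{k. k < N \<and> bin k = bin (par j)}. w k) / real (Nb (bin (par j)))"
    and Nsum: "\<And>u. u \<in> bin ` {..<N} \<Longrightarrow> (\<Sum>i\<in>{i. i < N \<and> bin i = u}. Nsp i) = Nb u"
    and Nb1: "\<And>u. u \<in> bin ` {..<N} \<Longrightarrow> Nb u \<ge> 1"
  shows "(\<Sum>j<N. wh j) = (\<Sum>i<N. w i)"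
proof -
  define W where "W u = (\<Sum>k\<in>{k. k < N \<and> bin k = u}. w k)" for u
  define \<phi> where "\<phi> i = W (bin i) / real (Nb (bin i))" for i
  have "(\<Sum>j<N. wh j) = (\<Sum>j<N. \<phi> (par j))"
    by (rule sum.cong) (auto simp: wh \<phi>_def W_def)
  also have "\<dots> = (\<Sum>i<N. of_nat (card {j. j < N \<and> par j = i}) * \<phi> i)"
    by (rule fiber_sum) (rule par)
  also have "\<dots> = (\<Sum>i<N. real (Nsp i) * \<phi> i)"
    by (rule sum.cong) (auto simp: card)
  also have "\<dots> = (\<Sum>u\<in>bin ` {..<N}. \<Sum>i\<in>{x\<in>{..<N}. bin x = u}. real (Nsp i) * \<phi> i)"
    by (rule sum.group[symmetric]) auto
  also have "\<dots> = (\<Sum>u\<in>bin ` {..<N}. W u)"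
  proof (rule sum.cong[OF refl])
    fix u assume u: "u \<in> bin ` {..<N}"
    have "(\<Sum>i\<in>{x\<in>{..<N}. bin x = u}. real (Nsp i) * \<phi> i)
        = (\<Sum>i\<in>{i. i < N \<and> bin i = u}. real (Nsp i) * (W u / real (Nb u)))"
      by (rule sum.cong) (auto simp: \<phi>_def)
    also have "\<dots> = real (\<Sum>i\<in>{i. i < N \<and> bin i = u}. Nsp i) * (W u / real (Nb u))"
      by (subst of_nat_sum) (simp only: sum_distrib_right)
    also have "\<dots> = W u" using Nsum[OF u] Nb1[OF u] by simp
    finally show "(\<Sum>i\<in>{x\<in>{..<N}. bin x = u}. real (Nsp i) * \<phi> i) = W u" .
  qed
  also have "\<dots> = (\<Sum>i<N. w i)"
    unfolding W_def
  proof -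
    have "(\<Sum>u\<in>bin ` {..<N}. \<Sum>k\<in>{x\<in>{..<N}. bin x = u}. w k) = (\<Sum>i<N. w i)"
      by (rule sum.group) auto
    moreover have "\<And>u. {x\<in>{..<N}. bin x = u} = {k. k < N \<and> bin k = u}" by auto
    ultimately show "(\<Sum>u\<in>bin ` {..<N}. \<Sum>k\<in>{k. k < N \<and> bin k = u}. w k) = (\<Sum>i<N. w i)" by simp
  qed
  finally show ?thesis .
qed


lemma sfs_of_prob:
  assumes "prob_space M" "subalgebra M G"
  shows "sigma_finite_subalgebra M G"
proof -
  interpret prob_space M by fact
  interpret finite_measure_subalgebra M G
    by unfold_locales (use assms in auto)
  show ?thesis by (rule sigma_finite_subalgebra_axioms)
qed

locale WEL =
  fixes M :: "'a measure" and X :: "'x measure" and K :: "'x \<Rightarrow> 'x measure"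
    and \<mu>0 :: "'x measure" and N :: nat
    and F Fh :: "nat \<Rightarrow> 'a measure"
    and xi xih :: "nat \<Rightarrow> nat \<Rightarrow> 'a \<Rightarrow> 'x" and w wh C :: "nat \<Rightarrow> nat \<Rightarrow> 'a \<Rightarrow> real"
    and Nsp par bin Nb :: "nat \<Rightarrow> nat \<Rightarrow> 'a \<Rightarrow> nat"
  assumes M: "prob_space M"
    and K: "K \<in> X \<rightarrow>\<^sub>M prob_algebra X"
    and mu0: "prob_space \<mu>0" "sets \<mu>0 = sets X"
    and N: "N \<ge> 1"
    and WE: "WE_method M X K \<mu>0 N F Fh xi w xih wh C Nsp par bin Nb"
begin

interpretation P: prob_space M by (rule M)

lemma subF: "subalgebra M (F t)" and subFh: "subalgebra M (Fh t)"
  and subFhF: "subalgebra (Fh t) (F t)" and subFFh: "subalgebra (F (Suc t)) (Fh t)"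
  using WE unfolding WE_method_def by auto

lemma sfF: "sigma_finite_subalgebra M (F t)" by (rule sfs_of_prob[OF M subF])
lemma sfFh: "sigma_finite_subalgebra M (Fh t)" by (rule sfs_of_prob[OF M subFh])

lemma xi_measF: "i < N \<Longrightarrow> xi t i \<in> F t \<rightarrow>\<^sub>M X"
  and w_measF: "i < N \<Longrightarrow> w t i \<in> borel_measurable (F t)"
  and C_measF: "i < N \<Longrightarrow> C t i \<in> borel_measurable (F t)"
  and w_nn: "i < N \<Longrightarrow> \<omega> \<in> space M \<Longrightarrow> w t i \<omega> \<ge> 0"
  and C_pos: "i < N \<Longrightarrow> \<omega> \<in> space M \<Longrightarrow> C t i \<omega> > 0"
  using WE unfolding WE_method_def by auto

lemma xih_measFh: "j < N \<Longrightarrow> xih t j \<in> Fh t \<rightarrow>\<^sub>M X"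
  and wh_measFh: "j < N \<Longrightarrow> wh t j \<in> borel_measurable (Fh t)"
  using WE unfolding WE_method_def by auto

lemma C_formula: "i < N \<Longrightarrow> \<omega> \<in> space M \<Longrightarrow>
        C t i \<omega> = real (Nb t (bin t i \<omega>) \<omega>) * w t i \<omega> /
                   (\<Sum>k\<in>{k. k < N \<and> bin t k \<omega> = bin t i \<omega>}. w t k \<omega>)"
  using WE unfolding WE_method_def by auto

lemma w_pos: "i < N \<Longrightarrow> \<omega> \<in> space M \<Longrightarrow> w t i \<omega> > 0"
  using C_pos[of i \<omega> t] C_formula[of i \<omega> t] w_nn[of i \<omega> t]
  by (cases "w t i \<omega> = 0") auto

lemma Nsp_meas: "i < N \<Longrightarrow> Nsp t i \<in> M \<rightarrow>\<^sub>M count_space UNIV"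
  and Nsp_int: "i < N \<Longrightarrow> integrable M (\<lambda>\<omega>. real (Nsp t i \<omega>))"
  and Nsp_ce: "i < N \<Longrightarrow> AE \<omega> in M. real_cond_exp M (F t) (\<lambda>\<omega>. real (Nsp t i \<omega>)) \<omega> = C t i \<omega>"
  using WE unfolding WE_method_def by auto

lemma children: "AE \<omega> in M. (\<forall>j<N. par t j \<omega> < N) \<and>
          (\<forall>i<N. card {j. j < N \<and> par t j \<omega> = i} = Nsp t i \<omega>) \<and>
          (\<forall>j<N. xih t j \<omega> = xi t (par t j \<omega>) \<omega>
                 \<and> wh t j \<omega> = w t (par t j \<omega>) \<omega> / C t (par t j \<omega>) \<omega>
                 \<and> wh t j \<omega> = (\<Sum>k\<in>{k. k < N \<and> bin t k \<omega> = bin t (par t j \<omega>) \<omega>}. w t k \<omega>)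
                              / real (Nb t (bin t (par t j \<omega>) \<omega>) \<omega>))"
  using WE unfolding WE_method_def by auto

lemma bins: "AE \<omega> in M. \<forall>u\<in>(\<lambda>i. bin t i \<omega>) ` {..<N}.
          (\<Sum>i\<in>{i. i < N \<and> bin t i \<omega> = u}. Nsp t i \<omega>) = Nb t u \<omega>"
  using WE unfolding WE_method_def by auto

lemma Nb1: "\<omega> \<in> space M \<Longrightarrow> u\<in>(\<lambda>i. bin t i \<omega>) ` {..<N} \<Longrightarrow> Nb t u \<omega> \<ge> 1"
proof -
  have "\<forall>t. \<forall>\<omega>\<in>space M. \<forall>u\<in>(\<lambda>i. bin t i \<omega>) ` {..<N}. Nb t u \<omega> \<ge> 1"
    using WE unfolding WE_method_def by (elim conjE) assumption
  then show "\<omega> \<in> space M \<Longrightarrow> u\<in>(\<lambda>i. bin t i \<omega>) ` {..<N} \<Longrightarrow> Nb t u \<omega> \<ge> 1" by blast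
qed

lemma evol: "(\<forall>j<N. A j \<in> sets X) \<Longrightarrow>
        (AE \<omega> in M. real_cond_exp M (Fh t)
                       (\<lambda>\<omega>. \<Prod>j<N. indicator (A j) (xi (Suc t) j \<omega>)) \<omega>
                     = (\<Prod>j<N. measure (K (xih t j \<omega>)) (A j)))"
  and w_Suc: "j < N \<Longrightarrow> \<omega> \<in> space M \<Longrightarrow> w (Suc t) j \<omega> = wh t j \<omega>"
  and xi0: "i < N \<Longrightarrow> distr M X (xi 0 i) = \<mu>0"
  and w0: "i < N \<Longrightarrow> \<omega> \<in> space M \<Longrightarrow> w 0 i \<omega> = 1 / real N"
  using WE unfolding WE_method_def by auto

lemma xi_meas: "i < N \<Longrightarrow> xi t i \<in> M \<rightarrow>\<^sub>M X"
  by (rule measurable_from_subalg[OF subF xi_measF])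
lemma w_meas: "i < N \<Longrightarrow> w t i \<in> borel_measurable M"
  by (rule measurable_from_subalg[OF subF w_measF])
lemma C_meas: "i < N \<Longrightarrow> C t i \<in> borel_measurable M"
  by (rule measurable_from_subalg[OF subF C_measF])
lemma xih_meas: "i < N \<Longrightarrow> xih t i \<in> M \<rightarrow>\<^sub>M X"
  by (rule measurable_from_subalg[OF subFh xih_measFh])
lemma wh_meas: "i < N \<Longrightarrow> wh t i \<in> borel_measurable M"
  by (rule measurable_from_subalg[OF subFh wh_measFh])

lemma xi_measFh: "i < N \<Longrightarrow> xi t i \<in> Fh t \<rightarrow>\<^sub>M X"
  by (rule measurable_from_subalg[OF subFhF xi_measF])
lemma w_measFh: "i < N \<Longrightarrow> w t i \<in> borel_measurable (Fh t)"
  by (rule measurable_from_subalg[OF subFhF w_measF])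

lemma Kx: "x \<in> space X \<Longrightarrow> prob_space (K x)" "x \<in> space X \<Longrightarrow> sets (K x) = sets X"
  using measurable_space[OF K] by (auto simp: space_prob_algebra)
lemma Kx_space: "x \<in> space X \<Longrightarrow> space (K x) = space X"
  using Kx(2) sets_eq_imp_space_eq by blast
lemma K_sub: "K \<in> X \<rightarrow>\<^sub>M subprob_algebra X"
  by (rule measurable_prob_algebraD[OF K])

lemma xi_space: "i < N \<Longrightarrow> \<omega> \<in> space M \<Longrightarrow> xi t i \<omega> \<in> space X"
  using measurable_space[OF xi_meas] by blast
lemma xih_space: "i < N \<Longrightarrow> \<omega> \<in> space M \<Longrightarrow> xih t i \<omega> \<in> space X"
  using measurable_space[OF xih_meas] by blast

definition Kp :: "('x \<Rightarrow> ennreal) \<Rightarrow> 'x \<Rightarrow> ennreal" where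
  "Kp g x = (\<integral>\<^sup>+y. g y \<partial>K x)"

lemma Kp_meas[measurable]: "g \<in> borel_measurable X \<Longrightarrow> Kp g \<in> borel_measurable X"
  unfolding Kp_def by (rule measurable_compose[OF K_sub nn_integral_measurable_subprob_algebra])

lemma kapp_meas[measurable]: "g \<in> borel_measurable X \<Longrightarrow> kernel_app K g \<in> borel_measurable X"
  unfolding kernel_app_def[abs_def] by (rule measurable_compose[OF K_sub integral_measurable_subprob_algebra])

lemma Nsp_nnce:
  assumes "i < N"
  shows "AE \<omega> in M. nn_cond_exp M (F t) (\<lambda>\<omega>. ennreal (real (Nsp t i \<omega>))) \<omega> = ennreal (C t i \<omega>)"
proof -
  interpret S: sigma_finite_subalgebra M "F t" by (rule sfF)
  have [measurable]: "Nsp t i \<in> M \<rightarrow>\<^sub>M count_space UNIV" using Nsp_meas[OF assms] .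
  have e0: "(\<lambda>\<omega>. ennreal (- real (Nsp t i \<omega>))) = (\<lambda>_. 0)" by (simp add: ennreal_neg)
  have "AE \<omega> in M. (0::ennreal) = nn_cond_exp M (F t) (\<lambda>_. 0) \<omega>"
    by (rule S.nn_cond_exp_F_meas) simp
  moreover have "AE \<omega> in M. C t i \<omega> > 0" using C_pos[OF assms] by (intro AE_I2) auto
  moreover note Nsp_ce[OF assms, of t]
  ultimately show ?thesis
  proof eventually_elim
    case (elim \<omega>)
    then have "enn2real (nn_cond_exp M (F t) (\<lambda>\<omega>. ennreal (real (Nsp t i \<omega>))) \<omega>) = C t i \<omega>"
      unfolding real_cond_exp_def e0 by simp
    with elim(2) show ?case
      by (metis enn2real_top ennreal_enn2real_if less_irrefl)
  qed
qed

lemma NS: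
  assumes Z[measurable]: "Z \<in> borel_measurable (F t)" and g[measurable]: "g \<in> borel_measurable X"
  shows "(\<integral>\<^sup>+\<omega>. Z \<omega> * (\<Sum>j<N. ennreal (wh t j \<omega>) * g (xih t j \<omega>)) \<partial>M)
       = (\<integral>\<^sup>+\<omega>. Z \<omega> * (\<Sum>i<N. ennreal (w t i \<omega>) * g (xi t i \<omega>)) \<partial>M)"
proof -
  interpret S: sigma_finite_subalgebra M "F t" by (rule sfF)
  define \<psi> where "\<psi> i \<omega> = ennreal (w t i \<omega> / C t i \<omega>) * g (xi t i \<omega>)" for i \<omega>
  have meas: "(\<lambda>\<omega>. Z \<omega> * \<psi> i \<omega>) \<in> borel_measurable (F t)" if "i < N" for i
  proof -
    have [measurable]: "xi t i \<in> F t \<rightarrow>\<^sub>M X" "w t i \<in> borel_measurable (F t)" "C t i \<in> borel_measurable (F t)"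
      using xi_measF w_measF C_measF that by auto
    show ?thesis unfolding \<psi>_def by measurable
  qed
  have measM: "(\<lambda>\<omega>. Z \<omega> * \<psi> i \<omega>) \<in> borel_measurable M" if "i < N" for i
    by (rule measurable_from_subalg[OF subF meas[OF that]])
  have "(\<integral>\<^sup>+\<omega>. Z \<omega> * (\<Sum>j<N. ennreal (wh t j \<omega>) * g (xih t j \<omega>)) \<partial>M)
      = (\<integral>\<^sup>+\<omega>. (\<Sum>i<N. (Z \<omega> * \<psi> i \<omega>) * ennreal (real (Nsp t i \<omega>))) \<partial>M)"
  proof (rule nn_integral_cong_AE)
    show "AE \<omega> in M. Z \<omega> * (\<Sum>j<N. ennreal (wh t j \<omega>) * g (xih t j \<omega>))
        = (\<Sum>i<N. (Z \<omega> * \<psi> i \<omega>) * ennreal (real (Nsp t i \<omega>)))"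
      using children[of t]
    proof eventually_elim
      case (elim \<omega>)
      have "(\<Sum>j<N. ennreal (wh t j \<omega>) * g (xih t j \<omega>)) = (\<Sum>j<N. \<psi> (par t j \<omega>) \<omega>)"
        by (rule sum.cong) (use elim in \<open>auto simp: \<psi>_def\<close>)
      also have "\<dots> = (\<Sum>i<N. of_nat (card {j. j < N \<and> par t j \<omega> = i}) * \<psi> i \<omega>)"
        by (rule fiber_sum) (use elim in auto)
      also have "\<dots> = (\<Sum>i<N. ennreal (real (Nsp t i \<omega>)) * \<psi> i \<omega>)"
        by (rule sum.cong) (use elim in \<open>auto simp: ennreal_of_nat_eq_real_of_nat\<close>)
      finally show ?case by (simp add: sum_distrib_left mult_ac)
    qed
  qed
  also have "\<dots> = (\<Sum>i<N. \<integral>\<^sup>+\<omega>. (Z \<omega> * \<psi> i \<omega>) * ennreal (real (Nsp t i \<omega>)) \<partial>M)"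
  proof (rule nn_integral_sum)
    fix i assume "i \<in> {..<N}"
    then have [measurable]: "(\<lambda>\<omega>. Z \<omega> * \<psi> i \<omega>) \<in> borel_measurable M" "Nsp t i \<in> M \<rightarrow>\<^sub>M count_space UNIV"
      using measM Nsp_meas by auto
    show "(\<lambda>\<omega>. (Z \<omega> * \<psi> i \<omega>) * ennreal (real (Nsp t i \<omega>))) \<in> borel_measurable M" by measurable
  qed
  also have "\<dots> = (\<Sum>i<N. \<integral>\<^sup>+\<omega>. Z \<omega> * (ennreal (w t i \<omega>) * g (xi t i \<omega>)) \<partial>M)"
  proof (rule sum.cong[OF refl])
    fix i assume i: "i \<in> {..<N}"
    have [measurable]: "Nsp t i \<in> M \<rightarrow>\<^sub>M count_space UNIV" using Nsp_meas i by auto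
    have "(\<integral>\<^sup>+\<omega>. (Z \<omega> * \<psi> i \<omega>) * ennreal (real (Nsp t i \<omega>)) \<partial>M)
        = (\<integral>\<^sup>+\<omega>. (Z \<omega> * \<psi> i \<omega>) * nn_cond_exp M (F t) (\<lambda>\<omega>. ennreal (real (Nsp t i \<omega>))) \<omega> \<partial>M)"
      by (rule S.nn_cond_exp_intg[symmetric]) (use meas i in auto)
    also have "\<dots> = (\<integral>\<^sup>+\<omega>. (Z \<omega> * \<psi> i \<omega>) * ennreal (C t i \<omega>) \<partial>M)"
      by (rule nn_integral_cong_AE) (use Nsp_nnce[of i t] i in \<open>auto elim!: AE_mp\<close>)
    also have "\<dots> = (\<integral>\<^sup>+\<omega>. Z \<omega> * (ennreal (w t i \<omega>) * g (xi t i \<omega>)) \<partial>M)"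
    proof (rule nn_integral_cong)
      fix \<omega> assume "\<omega> \<in> space M"
      then have "C t i \<omega> > 0" "w t i \<omega> \<ge> 0" using C_pos w_nn i by auto
      then have "ennreal (w t i \<omega> / C t i \<omega>) * ennreal (C t i \<omega>) = ennreal (w t i \<omega>)"
        by (simp add: ennreal_mult''[symmetric])
      then show "(Z \<omega> * \<psi> i \<omega>) * ennreal (C t i \<omega>) = Z \<omega> * (ennreal (w t i \<omega>) * g (xi t i \<omega>))"
        unfolding \<psi>_def by (metis (no_types, lifting) mult.assoc mult.commute)
    qed
    finally show "(\<integral>\<^sup>+\<omega>. (Z \<omega> * \<psi> i \<omega>) * ennreal (real (Nsp t i \<omega>)) \<partial>M)
        = (\<integral>\<^sup>+\<omega>. Z \<omega> * (ennreal (w t i \<omega>) * g (xi t i \<omega>)) \<partial>M)" .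
  qed
  also have "\<dots> = (\<integral>\<^sup>+\<omega>. (\<Sum>i<N. Z \<omega> * (ennreal (w t i \<omega>) * g (xi t i \<omega>))) \<partial>M)"
  proof (rule nn_integral_sum[symmetric])
    fix i assume "i \<in> {..<N}"
    then have [measurable]: "xi t i \<in> M \<rightarrow>\<^sub>M X" "w t i \<in> borel_measurable M"
      using xi_meas w_meas by auto
    have [measurable]: "Z \<in> borel_measurable M" by (rule measurable_from_subalg[OF subF Z])
    show "(\<lambda>\<omega>. Z \<omega> * (ennreal (w t i \<omega>) * g (xi t i \<omega>))) \<in> borel_measurable M" by measurable
  qed
  also have "\<dots> = (\<integral>\<^sup>+\<omega>. Z \<omega> * (\<Sum>i<N. ennreal (w t i \<omega>) * g (xi t i \<omega>)) \<partial>M)"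
    by (simp add: sum_distrib_left)
  finally show ?thesis .
qed

lemma evol_ind:
  assumes j: "j < N" and A: "A \<in> sets X"
  shows "AE \<omega> in M. nn_cond_exp M (Fh t) (\<lambda>\<omega>. indicator A (xi (Suc t) j \<omega>)) \<omega>
                  = ennreal (measure (K (xih t j \<omega>)) A)"
proof -
  interpret S: sigma_finite_subalgebra M "Fh t" by (rule sfFh)
  have [measurable]: "xi (Suc t) j \<in> M \<rightarrow>\<^sub>M X" using xi_meas j by auto
  define A' where "A' k = (if k = j then A else space X)" for k
  have A': "\<forall>k<N. A' k \<in> sets X" using A by (auto simp: A'_def)
  have prodeq: "(\<Prod>k<N. indicator (A' k) (xi (Suc t) k \<omega>) :: real) = indicator A (xi (Suc t) j \<omega>)"
    if "\<omega> \<in> space M" for \<omega>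
  proof -
    have "(\<Prod>k<N. indicator (A' k) (xi (Suc t) k \<omega>) :: real)
        = indicator (A' j) (xi (Suc t) j \<omega>) * (\<Prod>k\<in>{..<N}-{j}. indicator (A' k) (xi (Suc t) k \<omega>))"
      using j by (subst prod.remove[of _ j]) auto
    also have "(\<Prod>k\<in>{..<N}-{j}. indicator (A' k) (xi (Suc t) k \<omega>) :: real) = 1"
      by (rule prod.neutral) (use xi_space that in \<open>auto simp: A'_def\<close>)
    finally show ?thesis by (simp add: A'_def)
  qed
  have prodeq2: "(\<Prod>k<N. measure (K (xih t k \<omega>)) (A' k)) = measure (K (xih t j \<omega>)) A"
    if "\<omega> \<in> space M" for \<omega>
  proof -
    have "(\<Prod>k<N. measure (K (xih t k \<omega>)) (A' k))
        = measure (K (xih t j \<omega>)) (A' j) * (\<Prod>k\<in>{..<N}-{j}. measure (K (xih t k \<omega>)) (A' k))"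
      using j by (subst prod.remove[of _ j]) auto
    also have "(\<Prod>k\<in>{..<N}-{j}. measure (K (xih t k \<omega>)) (A' k)) = 1"
    proof (rule prod.neutral, intro ballI)
      fix k assume k: "k \<in> {..<N}-{j}"
      then have x: "xih t k \<omega> \<in> space X" using xih_space that by auto
      interpret Kk: prob_space "K (xih t k \<omega>)" using Kx(1)[OF x] .
      show "measure (K (xih t k \<omega>)) (A' k) = 1"
        using k Kk.prob_space Kx_space[OF x] by (auto simp: A'_def)
    qed
    finally show ?thesis by (simp add: A'_def)
  qed
  have pm: "(\<lambda>\<omega>. \<Prod>k<N. indicator (A' k) (xi (Suc t) k \<omega>) :: real) \<in> borel_measurable M"
  proof (intro borel_measurable_prod)
    fix k assume "k \<in> {..<N}"
    then have [measurable]: "xi (Suc t) k \<in> M \<rightarrow>\<^sub>M X" "A' k \<in> sets X" using xi_meas A' by auto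
    show "(\<lambda>\<omega>. indicator (A' k) (xi (Suc t) k \<omega>) :: real) \<in> borel_measurable M"
      by measurable
  qed
  have "AE \<omega> in M. real_cond_exp M (Fh t) (\<lambda>\<omega>. indicator A (xi (Suc t) j \<omega>)) \<omega>
        = real_cond_exp M (Fh t) (\<lambda>\<omega>. \<Prod>k<N. indicator (A' k) (xi (Suc t) k \<omega>)) \<omega>"
    by (rule S.real_cond_exp_cong) (use prodeq pm A in auto)
  moreover have "AE \<omega> in M. real_cond_exp M (Fh t) (\<lambda>\<omega>. \<Prod>k<N. indicator (A' k) (xi (Suc t) k \<omega>)) \<omega>
        = (\<Prod>k<N. measure (K (xih t k \<omega>)) (A' k))"
    using evol[OF A'] .
  moreover have "AE \<omega> in M. (0::ennreal) = nn_cond_exp M (Fh t) (\<lambda>_. 0) \<omega>"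
    by (rule S.nn_cond_exp_F_meas) simp
  moreover have "AE \<omega> in M. nn_cond_exp M (Fh t) (\<lambda>\<omega>. indicator A (xi (Suc t) j \<omega>)) \<omega>
        \<le> nn_cond_exp M (Fh t) (\<lambda>_. 1) \<omega>"
  proof (rule S.nn_cond_exp_mono)
    show "AE \<omega> in M. indicator A (xi (Suc t) j \<omega>) \<le> (1::ennreal)"
      by (intro AE_I2) (auto split: split_indicator)
    show "(\<lambda>\<omega>. indicator A (xi (Suc t) j \<omega>) :: ennreal) \<in> borel_measurable M" using A by measurable
  qed simp
  moreover have "AE \<omega> in M. (1::ennreal) = nn_cond_exp M (Fh t) (\<lambda>_. 1) \<omega>"
    by (rule S.nn_cond_exp_F_meas) simp
  moreover have "AE \<omega> in M. \<omega> \<in> space M" by simp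
  ultimately show ?thesis
  proof (eventually_elim)
    case (elim \<omega>)
    have e0: "(\<lambda>\<omega>. ennreal (- indicator A (xi (Suc t) j \<omega>))) = (\<lambda>_. 0)"
      by (auto simp: ennreal_neg split: split_indicator)
    have fin: "nn_cond_exp M (Fh t) (\<lambda>\<omega>. indicator A (xi (Suc t) j \<omega>)) \<omega> \<noteq> top"
    proof
      assume "nn_cond_exp M (Fh t) (\<lambda>\<omega>. indicator A (xi (Suc t) j \<omega>)) \<omega> = top"
      with elim(4,5) have "top \<le> (1::ennreal)" by simp
      then show False by (simp add: top_unique)
    qed
    have "enn2real (nn_cond_exp M (Fh t) (\<lambda>\<omega>. indicator A (xi (Suc t) j \<omega>)) \<omega>)
        = measure (K (xih t j \<omega>)) A"
      using elim(1,2,3) prodeq2[OF elim(6)]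
      unfolding real_cond_exp_def e0 by (simp add: ennreal_indicator)
    then show ?case using fin by (metis ennreal_enn2real_if)
  qed
qed

lemma Kp_cong: "x \<in> space X \<Longrightarrow> (\<And>y. y \<in> space X \<Longrightarrow> f y = g y) \<Longrightarrow> Kp f x = Kp g x"
  unfolding Kp_def by (rule nn_integral_cong) (simp add: Kx_space)

lemma Kp_indicator: "x \<in> space X \<Longrightarrow> A \<in> sets X \<Longrightarrow> Kp (indicator A) x = ennreal (measure (K x) A)"
proof -
  assume x: "x \<in> space X" and A: "A \<in> sets X"
  interpret Kx: prob_space "K x" using Kx(1)[OF x] .
  show ?thesis unfolding Kp_def using A Kx(2)[OF x]
    by (simp add: Kx.emeasure_eq_measure)
qed

lemma Kp_cmult: "x \<in> space X \<Longrightarrow> u \<in> borel_measurable X \<Longrightarrow> Kp (\<lambda>y. c * u y) x = c * Kp u x"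
  unfolding Kp_def by (rule nn_integral_cmult) (simp add: measurable_cong_sets[OF Kx(2) refl])

lemma Kp_add: "x \<in> space X \<Longrightarrow> u \<in> borel_measurable X \<Longrightarrow> v \<in> borel_measurable X \<Longrightarrow>
    Kp (\<lambda>y. v y + u y) x = Kp v x + Kp u x"
  unfolding Kp_def by (rule nn_integral_add) (simp_all add: measurable_cong_sets[OF Kx(2) refl])

lemma Kp_SUP: "x \<in> space X \<Longrightarrow> incseq U \<Longrightarrow> (\<And>i. U i \<in> borel_measurable X) \<Longrightarrow>
    Kp (\<lambda>y. SUP i. U i y) x = (SUP i. Kp (U i) x)"
  unfolding Kp_def by (rule nn_integral_monotone_convergence_SUP) (simp_all add: measurable_cong_sets[OF Kx(2) refl])

lemma Kp_mono: "(\<And>y. y \<in> space X \<Longrightarrow> f y \<le> g y) \<Longrightarrow> x \<in> space X \<Longrightarrow> Kp f x \<le> Kp g x"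
  unfolding Kp_def by (rule nn_integral_mono) (simp add: Kx_space)

lemma NE1:
  assumes j: "j < N" and Z[measurable]: "Z \<in> borel_measurable (Fh t)" and g: "g \<in> borel_measurable X"
  shows "(\<integral>\<^sup>+\<omega>. Z \<omega> * g (xi (Suc t) j \<omega>) \<partial>M) = (\<integral>\<^sup>+\<omega>. Z \<omega> * Kp g (xih t j \<omega>) \<partial>M)"
  using g
proof (induction rule: borel_measurable_induct)
  interpret S: sigma_finite_subalgebra M "Fh t" by (rule sfFh)
  have [measurable]: "xi (Suc t) j \<in> M \<rightarrow>\<^sub>M X" "xih t j \<in> M \<rightarrow>\<^sub>M X" using xi_meas xih_meas j by auto
  have ZM[measurable]: "Z \<in> borel_measurable M" by (rule measurable_from_subalg[OF subFh Z])
  {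
  case (cong f g)
  have "(\<integral>\<^sup>+\<omega>. Z \<omega> * f (xi (Suc t) j \<omega>) \<partial>M) = (\<integral>\<^sup>+\<omega>. Z \<omega> * g (xi (Suc t) j \<omega>) \<partial>M)"
    by (rule nn_integral_cong) (use cong(3) xi_space j in auto)
  also have "\<dots> = (\<integral>\<^sup>+\<omega>. Z \<omega> * Kp g (xih t j \<omega>) \<partial>M)" by fact
  also have "\<dots> = (\<integral>\<^sup>+\<omega>. Z \<omega> * Kp f (xih t j \<omega>) \<partial>M)"
    by (rule nn_integral_cong) (use cong(3) xih_space j Kp_cong in metis)
  finally show ?case .
  next
  case (set A)
  have [measurable]: "A \<in> sets X" by fact
  have "(\<integral>\<^sup>+\<omega>. Z \<omega> * indicator A (xi (Suc t) j \<omega>) \<partial>M)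
      = (\<integral>\<^sup>+\<omega>. Z \<omega> * nn_cond_exp M (Fh t) (\<lambda>\<omega>. indicator A (xi (Suc t) j \<omega>)) \<omega> \<partial>M)"
    by (rule S.nn_cond_exp_intg[symmetric]) simp_all
  also have "\<dots> = (\<integral>\<^sup>+\<omega>. Z \<omega> * ennreal (measure (K (xih t j \<omega>)) A) \<partial>M)"
    by (rule nn_integral_cong_AE) (use evol_ind[OF j set, of t] in \<open>auto elim!: AE_mp\<close>)
  also have "\<dots> = (\<integral>\<^sup>+\<omega>. Z \<omega> * Kp (indicator A) (xih t j \<omega>) \<partial>M)"
    by (rule nn_integral_cong) (use xih_space j Kp_indicator set in auto)
  finally show ?case .
  next
  case (mult u c)
  have [measurable]: "u \<in> borel_measurable X" by fact
  have "(\<integral>\<^sup>+\<omega>. Z \<omega> * (c * u (xi (Suc t) j \<omega>)) \<partial>M) = (\<integral>\<^sup>+\<omega>. c * (Z \<omega> * u (xi (Suc t) j \<omega>)) \<partial>M)"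
    by (simp add: mult_ac)
  also have "\<dots> = c * (\<integral>\<^sup>+\<omega>. Z \<omega> * u (xi (Suc t) j \<omega>) \<partial>M)"
    by (rule nn_integral_cmult) simp
  also have "\<dots> = c * (\<integral>\<^sup>+\<omega>. Z \<omega> * Kp u (xih t j \<omega>) \<partial>M)" using mult by simp
  also have "\<dots> = (\<integral>\<^sup>+\<omega>. c * (Z \<omega> * Kp u (xih t j \<omega>)) \<partial>M)"
    by (rule nn_integral_cmult[symmetric]) simp
  also have "\<dots> = (\<integral>\<^sup>+\<omega>. Z \<omega> * Kp (\<lambda>y. c * u y) (xih t j \<omega>) \<partial>M)"
    by (rule nn_integral_cong) (use xih_space j Kp_cmult[of _ u c] in \<open>auto simp: mult_ac\<close>)
  finally show ?case .
  next
  case (add u v)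
  have [measurable]: "u \<in> borel_measurable X" "v \<in> borel_measurable X" by fact+
  have "(\<integral>\<^sup>+\<omega>. Z \<omega> * (v (xi (Suc t) j \<omega>) + u (xi (Suc t) j \<omega>)) \<partial>M)
      = (\<integral>\<^sup>+\<omega>. Z \<omega> * v (xi (Suc t) j \<omega>) + Z \<omega> * u (xi (Suc t) j \<omega>) \<partial>M)"
    by (simp add: distrib_left)
  also have "\<dots> = (\<integral>\<^sup>+\<omega>. Z \<omega> * v (xi (Suc t) j \<omega>) \<partial>M) + (\<integral>\<^sup>+\<omega>. Z \<omega> * u (xi (Suc t) j \<omega>) \<partial>M)"
    by (rule nn_integral_add) simp_all
  also have "\<dots> = (\<integral>\<^sup>+\<omega>. Z \<omega> * Kp v (xih t j \<omega>) \<partial>M) + (\<integral>\<^sup>+\<omega>. Z \<omega> * Kp u (xih t j \<omega>) \<partial>M)"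
    using add by simp
  also have "\<dots> = (\<integral>\<^sup>+\<omega>. Z \<omega> * Kp v (xih t j \<omega>) + Z \<omega> * Kp u (xih t j \<omega>) \<partial>M)"
    by (rule nn_integral_add[symmetric]) simp_all
  also have "\<dots> = (\<integral>\<^sup>+\<omega>. Z \<omega> * Kp (\<lambda>y. v y + u y) (xih t j \<omega>) \<partial>M)"
    by (rule nn_integral_cong) (use xih_space j Kp_add[of _ u v] in \<open>auto simp: distrib_left\<close>)
  finally show ?case .
  next
  case (seq U)
  have [measurable]: "U i \<in> borel_measurable X" for i by fact
  have "(\<integral>\<^sup>+\<omega>. Z \<omega> * (SUP i. U i) (xi (Suc t) j \<omega>) \<partial>M)
      = (\<integral>\<^sup>+\<omega>. (SUP i. Z \<omega> * U i (xi (Suc t) j \<omega>)) \<partial>M)"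
    unfolding SUP_apply by (simp add: SUP_mult_left_ennreal)
  also have "\<dots> = (SUP i. \<integral>\<^sup>+\<omega>. Z \<omega> * U i (xi (Suc t) j \<omega>) \<partial>M)"
  proof (rule nn_integral_monotone_convergence_SUP)
    show "incseq (\<lambda>i \<omega>. Z \<omega> * U i (xi (Suc t) j \<omega>))"
      using \<open>incseq U\<close> by (auto simp: incseq_def le_fun_def intro!: mult_left_mono)
  qed simp
  also have "\<dots> = (SUP i. \<integral>\<^sup>+\<omega>. Z \<omega> * Kp (U i) (xih t j \<omega>) \<partial>M)"
    using seq.IH by simp
  also have "\<dots> = (\<integral>\<^sup>+\<omega>. (SUP i. Z \<omega> * Kp (U i) (xih t j \<omega>)) \<partial>M)"
  proof (rule nn_integral_monotone_convergence_SUP[symmetric])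
    have "Kp (U i) x \<le> Kp (U (Suc i)) x" for i x
      unfolding Kp_def using \<open>incseq U\<close> by (intro nn_integral_mono) (auto simp: incseq_def le_fun_def)
    then show "incseq (\<lambda>i \<omega>. Z \<omega> * Kp (U i) (xih t j \<omega>))"
      by (auto simp: incseq_Suc_iff le_fun_def intro!: mult_left_mono)
  qed simp
  also have "\<dots> = (\<integral>\<^sup>+\<omega>. Z \<omega> * Kp (SUP i. U i) (xih t j \<omega>) \<partial>M)"
  proof (rule nn_integral_cong)
    fix \<omega> assume "\<omega> \<in> space M"
    then have x: "xih t j \<omega> \<in> space X" using xih_space j by auto
    have "Kp (SUP i. U i) (xih t j \<omega>) = Kp (\<lambda>y. SUP i. U i y) (xih t j \<omega>)"
      by (simp add: SUP_apply[abs_def])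
    also have "\<dots> = (SUP i. Kp (U i) (xih t j \<omega>))"
      by (rule Kp_SUP[OF x \<open>incseq U\<close>]) simp
    finally show "(SUP i. Z \<omega> * Kp (U i) (xih t j \<omega>)) = Z \<omega> * Kp (SUP i. U i) (xih t j \<omega>)"
      by (simp add: SUP_mult_left_ennreal)
  qed
  finally show ?case .
  }
qed

end

context WEL
begin

interpretation P: prob_space M by (rule M)

lemma Kp_const: "x \<in> space X \<Longrightarrow> Kp (\<lambda>_. c) x = c"
proof -
  assume x: "x \<in> space X"
  interpret Kx: prob_space "K x" using Kx(1)[OF x] .
  show ?thesis unfolding Kp_def by (simp add: Kx.emeasure_space_1)
qed

lemma Kp_add_const: "x \<in> space X \<Longrightarrow> g \<in> borel_measurable X \<Longrightarrow> Kp (\<lambda>y. g y + c) x = Kp g x + c"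
  using Kp_add[of x "\<lambda>_. c" g] Kp_const[of x c] by simp

lemma Kpn_meas[measurable]: "g \<in> borel_measurable X \<Longrightarrow> (Kp ^^ n) g \<in> borel_measurable X"
  by (induction n) auto

lemma Kpn_mono: "(\<And>y. y \<in> space X \<Longrightarrow> f y \<le> g y) \<Longrightarrow> x \<in> space X \<Longrightarrow> (Kp ^^ n) f x \<le> (Kp ^^ n) g x"
proof (induction n arbitrary: x)
  case 0 then show ?case by simp
next
  case (Suc n) then show ?case by (auto intro!: Kp_mono)
qed

lemma Kpn_add_const: "g \<in> borel_measurable X \<Longrightarrow> x \<in> space X \<Longrightarrow> (Kp ^^ n) (\<lambda>y. g y + c) x = (Kp ^^ n) g x + c"
proof (induction n arbitrary: x)
  case 0 then show ?case by simp
next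
  case (Suc n)
  have "(Kp ^^ Suc n) (\<lambda>y. g y + c) x = Kp ((Kp ^^ n) (\<lambda>y. g y + c)) x" by simp
  also have "\<dots> = Kp (\<lambda>y. (Kp ^^ n) g y + c) x"
    by (rule Kp_cong) (use Suc in auto)
  also have "\<dots> = Kp ((Kp ^^ n) g) x + c"
    by (rule Kp_add_const) (use Suc in auto)
  finally show ?case by simp
qed

lemma kapp_bound: "x \<in> space X \<Longrightarrow> ennreal \<bar>kernel_app K g x\<bar> \<le> Kp (\<lambda>y. ennreal \<bar>g y\<bar>) x"
  unfolding kernel_app_def Kp_def
proof (cases "integrable (K x) g")
  case True
  then show "ennreal \<bar>integral\<^sup>L (K x) g\<bar> \<le> (\<integral>\<^sup>+ y. ennreal \<bar>g y\<bar> \<partial>K x)"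
    using integral_norm_bound_ennreal[OF True] by simp
next
  case False
  then show "ennreal \<bar>integral\<^sup>L (K x) g\<bar> \<le> (\<integral>\<^sup>+ y. ennreal \<bar>g y\<bar> \<partial>K x)"
    by (simp add: not_integrable_integral_eq)
qed

lemma kpow_Suc: "kernel_pow K (Suc n) g = kernel_app K (kernel_pow K n g)"
  unfolding kernel_pow_def by simp

lemma kpow_0: "kernel_pow K 0 g = g"
  unfolding kernel_pow_def by simp

lemma kpow_meas[measurable]: "g \<in> borel_measurable X \<Longrightarrow> kernel_pow K n g \<in> borel_measurable X"
  by (induction n) (auto simp: kpow_Suc kpow_0)

lemma kpow_bound: "x \<in> space X \<Longrightarrow> ennreal \<bar>kernel_pow K n g x\<bar> \<le> (Kp ^^ n) (\<lambda>y. ennreal \<bar>g y\<bar>) x"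
proof (induction n arbitrary: x)
  case 0 then show ?case by (simp add: kpow_0)
next
  case (Suc n)
  have "ennreal \<bar>kernel_pow K (Suc n) g x\<bar> \<le> Kp (\<lambda>y. ennreal \<bar>kernel_pow K n g y\<bar>) x"
    unfolding kpow_Suc by (rule kapp_bound[OF Suc.prems])
  also have "\<dots> \<le> Kp ((Kp ^^ n) (\<lambda>y. ennreal \<bar>g y\<bar>)) x"
    by (rule Kp_mono) (use Suc in auto)
  finally show ?case by simp
qed

lemma kapp_split:
  assumes x: "x \<in> space X" and g[measurable]: "g \<in> borel_measurable X"
    and fin: "Kp (\<lambda>y. ennreal \<bar>g y\<bar>) x < \<infinity>"
  shows "integrable (K x) g"
    "kernel_app K g x = kernel_app K (\<lambda>y. max (g y) 0) x - kernel_app K (\<lambda>y. max (- g y) 0) x"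
    "ennreal (kernel_app K (\<lambda>y. max (g y) 0) x) = Kp (\<lambda>y. ennreal (max (g y) 0)) x"
    "ennreal (kernel_app K (\<lambda>y. max (- g y) 0) x) = Kp (\<lambda>y. ennreal (max (- g y) 0)) x"
proof -
  have [measurable]: "g \<in> borel_measurable (K x)" using g by (simp add: measurable_cong_sets[OF Kx(2)[OF x] refl])
  interpret Kx: prob_space "K x" using Kx(1)[OF x] .
  show gi: "integrable (K x) g"
    using fin unfolding Kp_def by (intro integrableI_bounded) auto
  have ip: "integrable (K x) (\<lambda>y. max (g y) 0)" and im: "integrable (K x) (\<lambda>y. max (- g y) 0)"
    using gi by (auto intro!: integrable_max)
  have "kernel_app K g x = (\<integral>y. max (g y) 0 - max (- g y) 0 \<partial>K x)"
    unfolding kernel_app_def by (rule Bochner_Integration.integral_cong) auto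
  also have "\<dots> = kernel_app K (\<lambda>y. max (g y) 0) x - kernel_app K (\<lambda>y. max (- g y) 0) x"
    unfolding kernel_app_def by (rule Bochner_Integration.integral_diff[OF ip im])
  finally show "kernel_app K g x = kernel_app K (\<lambda>y. max (g y) 0) x - kernel_app K (\<lambda>y. max (- g y) 0) x" .
  show "ennreal (kernel_app K (\<lambda>y. max (g y) 0) x) = Kp (\<lambda>y. ennreal (max (g y) 0)) x"
    unfolding kernel_app_def Kp_def by (rule nn_integral_eq_integral[symmetric, OF ip]) auto
  show "ennreal (kernel_app K (\<lambda>y. max (- g y) 0) x) = Kp (\<lambda>y. ennreal (max (- g y) 0)) x"
    unfolding kernel_app_def Kp_def by (rule nn_integral_eq_integral[symmetric, OF im]) auto
qed

lemma kapp_nonneg: "(\<And>y. y \<in> space X \<Longrightarrow> g y \<ge> 0) \<Longrightarrow> x \<in> space X \<Longrightarrow> kernel_app K g x \<ge> 0"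
  unfolding kernel_app_def by (rule Bochner_Integration.integral_nonneg) (simp add: Kx_space)

definition mom :: "nat \<Rightarrow> ('x \<Rightarrow> ennreal) \<Rightarrow> ennreal" where
  "mom t g = (\<integral>\<^sup>+\<omega>. (\<Sum>i<N. ennreal (w t i \<omega>) * g (xi t i \<omega>)) \<partial>M)"

lemma mom_Suc:
  assumes g[measurable]: "g \<in> borel_measurable X"
  shows "mom (Suc t) g = mom t (Kp g)"
proof -
  have "mom (Suc t) g = (\<integral>\<^sup>+\<omega>. (\<Sum>j<N. ennreal (wh t j \<omega>) * g (xi (Suc t) j \<omega>)) \<partial>M)"
    unfolding mom_def by (rule nn_integral_cong) (auto simp: w_Suc)
  also have "\<dots> = (\<Sum>j<N. \<integral>\<^sup>+\<omega>. ennreal (wh t j \<omega>) * g (xi (Suc t) j \<omega>) \<partial>M)"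
  proof (rule nn_integral_sum)
    fix j assume "j \<in> {..<N}"
    then have [measurable]: "xi (Suc t) j \<in> M \<rightarrow>\<^sub>M X" "wh t j \<in> borel_measurable M"
      using xi_meas wh_meas by auto
    show "(\<lambda>\<omega>. ennreal (wh t j \<omega>) * g (xi (Suc t) j \<omega>)) \<in> borel_measurable M" by measurable
  qed
  also have "\<dots> = (\<Sum>j<N. \<integral>\<^sup>+\<omega>. ennreal (wh t j \<omega>) * Kp g (xih t j \<omega>) \<partial>M)"
  proof (rule sum.cong[OF refl])
    fix j assume j: "j \<in> {..<N}"
    have [measurable]: "wh t j \<in> borel_measurable (Fh t)" using wh_measFh j by auto
    show "(\<integral>\<^sup>+\<omega>. ennreal (wh t j \<omega>) * g (xi (Suc t) j \<omega>) \<partial>M) = (\<integral>\<^sup>+\<omega>. ennreal (wh t j \<omega>) * Kp g (xih t j \<omega>) \<partial>M)"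
      by (rule NE1) (use j in auto)
  qed
  also have "\<dots> = (\<integral>\<^sup>+\<omega>. (\<Sum>j<N. ennreal (wh t j \<omega>) * Kp g (xih t j \<omega>)) \<partial>M)"
  proof (rule nn_integral_sum[symmetric])
    fix j assume "j \<in> {..<N}"
    then have [measurable]: "xih t j \<in> M \<rightarrow>\<^sub>M X" "wh t j \<in> borel_measurable M"
      using xih_meas wh_meas by auto
    show "(\<lambda>\<omega>. ennreal (wh t j \<omega>) * Kp g (xih t j \<omega>)) \<in> borel_measurable M" by measurable
  qed
  also have "\<dots> = (\<integral>\<^sup>+\<omega>. 1 * (\<Sum>j<N. ennreal (wh t j \<omega>) * Kp g (xih t j \<omega>)) \<partial>M)" by simp
  also have "\<dots> = (\<integral>\<^sup>+\<omega>. 1 * (\<Sum>i<N. ennreal (w t i \<omega>) * Kp g (xi t i \<omega>)) \<partial>M)"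
    by (rule NS) auto
  finally show ?thesis unfolding mom_def by simp
qed

lemma mom_0:
  assumes g[measurable]: "g \<in> borel_measurable X"
  shows "mom 0 g = (\<integral>\<^sup>+x. g x \<partial>\<mu>0)"
proof -
  have "mom 0 g = (\<Sum>i<N. \<integral>\<^sup>+\<omega>. ennreal (1 / real N) * g (xi 0 i \<omega>) \<partial>M)"
    unfolding mom_def
  proof (subst nn_integral_sum[symmetric])
    fix i assume "i \<in> {..<N}"
    then have [measurable]: "xi 0 i \<in> M \<rightarrow>\<^sub>M X" using xi_meas by auto
    show "(\<lambda>\<omega>. ennreal (1 / real N) * g (xi 0 i \<omega>)) \<in> borel_measurable M" by measurable
  qed (rule nn_integral_cong, auto simp: w0)
  also have "\<dots> = (\<Sum>i<N. ennreal (1 / real N) * (\<integral>\<^sup>+x. g x \<partial>\<mu>0))"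
  proof (rule sum.cong[OF refl])
    fix i assume i: "i \<in> {..<N}"
    then have [measurable]: "xi 0 i \<in> M \<rightarrow>\<^sub>M X" using xi_meas by auto
    have "(\<integral>\<^sup>+\<omega>. ennreal (1 / real N) * g (xi 0 i \<omega>) \<partial>M) = ennreal (1 / real N) * (\<integral>\<^sup>+\<omega>. g (xi 0 i \<omega>) \<partial>M)"
      by (rule nn_integral_cmult) simp
    also have "(\<integral>\<^sup>+\<omega>. g (xi 0 i \<omega>) \<partial>M) = (\<integral>\<^sup>+x. g x \<partial>distr M X (xi 0 i))"
      by (rule nn_integral_distr[symmetric]) simp_all
    also have "distr M X (xi 0 i) = \<mu>0" using xi0 i by auto
    finally show "(\<integral>\<^sup>+\<omega>. ennreal (1 / real N) * g (xi 0 i \<omega>) \<partial>M) = ennreal (1 / real N) * (\<integral>\<^sup>+x. g x \<partial>\<mu>0)" .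
  qed
  also have "\<dots> = (of_nat N * ennreal (1 / real N)) * (\<integral>\<^sup>+x. g x \<partial>\<mu>0)"
    by (simp add: mult.assoc)
  also have "of_nat N * ennreal (1 / real N) = 1"
    using N by (simp add: ennreal_of_nat_eq_real_of_nat ennreal_mult[symmetric])
  finally show ?thesis by simp
qed

lemma meas_kpow_space: "meas_kpow \<mu>0 K t \<in> space (prob_algebra X)"
proof (induction t)
  case 0 then show ?case using mu0 by (simp add: meas_kpow_def space_prob_algebra)
next
  case (Suc t)
  have "meas_kpow \<mu>0 K (Suc t) = meas_kpow \<mu>0 K t \<bind> K" unfolding meas_kpow_def by simp
  then show ?case using prob_space_bind'[OF Suc K] sets_bind'[OF Suc K]
    by (simp add: space_prob_algebra)
qed

lemma mom_kpow:
  assumes g[measurable]: "g \<in> borel_measurable X"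
  shows "mom t g = (\<integral>\<^sup>+x. g x \<partial>meas_kpow \<mu>0 K t)"
  using g
proof (induction t arbitrary: g)
  case 0 then show ?case using mom_0 by (simp add: meas_kpow_def)
next
  case (Suc t)
  have [measurable]: "g \<in> borel_measurable X" by fact
  have st: "sets (meas_kpow \<mu>0 K t) = sets X" using meas_kpow_space by (simp add: space_prob_algebra)
  have "mom (Suc t) g = mom t (Kp g)" by (rule mom_Suc) simp
  also have "\<dots> = (\<integral>\<^sup>+x. Kp g x \<partial>meas_kpow \<mu>0 K t)" by (rule Suc.IH) simp
  also have "\<dots> = (\<integral>\<^sup>+x. g x \<partial>(meas_kpow \<mu>0 K t \<bind> K))"
  proof -
    have Kt: "K \<in> meas_kpow \<mu>0 K t \<rightarrow>\<^sub>M subprob_algebra X"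
      using K_sub measurable_cong_sets[OF st refl] by blast
    show ?thesis unfolding Kp_def
      by (rule nn_integral_bind[where B=X, symmetric]) (simp_all add: Kt)
  qed
  also have "meas_kpow \<mu>0 K t \<bind> K = meas_kpow \<mu>0 K (Suc t)" unfolding meas_kpow_def by simp
  finally show ?case .
qed

lemma mom_Kpn: "g \<in> borel_measurable X \<Longrightarrow> mom t ((Kp ^^ n) g) = mom (t + n) g"
proof (induction n arbitrary: t)
  case 0 then show ?case by simp
next
  case (Suc n)
  have "mom t ((Kp ^^ Suc n) g) = mom t (Kp ((Kp ^^ n) g))" by simp
  also have "\<dots> = mom (Suc t) ((Kp ^^ n) g)" by (rule mom_Suc[symmetric]) (use Suc in simp)
  also have "\<dots> = mom (Suc t + n) g" by (rule Suc.IH) fact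
  finally show ?case by simp
qed

lemma mom_mono: "(\<And>y. y \<in> space X \<Longrightarrow> f y \<le> g y) \<Longrightarrow> mom t f \<le> mom t g"
  unfolding mom_def
  by (intro nn_integral_mono sum_mono mult_left_mono) (auto simp: xi_space)

lemma mom_sum:
  assumes "finite I" "\<And>s. s \<in> I \<Longrightarrow> g s \<in> borel_measurable X"
  shows "mom t (\<lambda>y. \<Sum>s\<in>I. g s y) = (\<Sum>s\<in>I. mom t (g s))"
proof -
  have "mom t (\<lambda>y. \<Sum>s\<in>I. g s y) = (\<integral>\<^sup>+\<omega>. (\<Sum>s\<in>I. \<Sum>i<N. ennreal (w t i \<omega>) * g s (xi t i \<omega>)) \<partial>M)"
    unfolding mom_def by (simp add: sum_distrib_left sum.swap[of _ I])
  also have "\<dots> = (\<Sum>s\<in>I. \<integral>\<^sup>+\<omega>. (\<Sum>i<N. ennreal (w t i \<omega>) * g s (xi t i \<omega>)) \<partial>M)"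
  proof (rule nn_integral_sum)
    fix s assume s: "s \<in> I"
    show "(\<lambda>\<omega>. \<Sum>i<N. ennreal (w t i \<omega>) * g s (xi t i \<omega>)) \<in> borel_measurable M"
    proof (rule borel_measurable_sum)
      fix i assume "i \<in> {..<N}"
      then have [measurable]: "xi t i \<in> M \<rightarrow>\<^sub>M X" "w t i \<in> borel_measurable M" "g s \<in> borel_measurable X"
        using xi_meas w_meas assms s by auto
      show "(\<lambda>\<omega>. ennreal (w t i \<omega>) * g s (xi t i \<omega>)) \<in> borel_measurable M" by measurable
    qed
  qed
  finally show ?thesis unfolding mom_def .
qed

lemma mom_one: "mom t (\<lambda>_. 1) = 1"
proof -
  interpret Q: prob_space "meas_kpow \<mu>0 K t" using meas_kpow_space by (simp add: space_prob_algebra)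
  show ?thesis by (subst mom_kpow) (simp_all add: Q.emeasure_space_1)
qed

lemma mom_cmult:
  assumes "g \<in> borel_measurable X"
  shows "mom t (\<lambda>y. c * g y) = c * mom t g"
proof -
  have "mom t (\<lambda>y. c * g y) = (\<integral>\<^sup>+\<omega>. c * (\<Sum>i<N. ennreal (w t i \<omega>) * g (xi t i \<omega>)) \<partial>M)"
    unfolding mom_def by (simp add: sum_distrib_left mult_ac)
  also have "\<dots> = c * mom t g" unfolding mom_def
  proof (rule nn_integral_cmult)
    show "(\<lambda>\<omega>. \<Sum>i<N. ennreal (w t i \<omega>) * g (xi t i \<omega>)) \<in> borel_measurable M"
    proof (rule borel_measurable_sum)
      fix i assume "i \<in> {..<N}"
      then have [measurable]: "xi t i \<in> M \<rightarrow>\<^sub>M X" "w t i \<in> borel_measurable M" "g \<in> borel_measurable X"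
        using xi_meas w_meas assms by auto
      show "(\<lambda>\<omega>. ennreal (w t i \<omega>) * g (xi t i \<omega>)) \<in> borel_measurable M" by measurable
    qed
  qed
  finally show ?thesis .
qed

lemma mom_const: "mom t (\<lambda>_. c) = c"
  using mom_cmult[of "\<lambda>_. 1" t c] mom_one by simp

end

lemma GL:
  fixes L R Lp Ln Rp Rn :: "'a \<Rightarrow> real"
  assumes meas[measurable]: "L \<in> borel_measurable M" "R \<in> borel_measurable M" "Lp \<in> borel_measurable M"
      "Ln \<in> borel_measurable M" "Rp \<in> borel_measurable M" "Rn \<in> borel_measurable M"
    and nn: "AE x in M. 0 \<le> Lp x" "AE x in M. 0 \<le> Ln x" "AE x in M. 0 \<le> Rp x" "AE x in M. 0 \<le> Rn x"
    and dL: "AE x in M. L x = Lp x - Ln x" and dR: "AE x in M. R x = Rp x - Rn x"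
    and ep: "(\<integral>\<^sup>+x. ennreal (Lp x) \<partial>M) = (\<integral>\<^sup>+x. ennreal (Rp x) \<partial>M)"
    and en: "(\<integral>\<^sup>+x. ennreal (Ln x) \<partial>M) = (\<integral>\<^sup>+x. ennreal (Rn x) \<partial>M)"
    and fp: "(\<integral>\<^sup>+x. ennreal (Rp x) \<partial>M) < \<infinity>" and fn: "(\<integral>\<^sup>+x. ennreal (Rn x) \<partial>M) < \<infinity>"
  shows "integrable M L" "integrable M R" "(\<integral>x. L x \<partial>M) = (\<integral>x. R x \<partial>M)"
proof -
  have iLp: "integrable M Lp" by (rule integrableI_nonneg) (use nn ep fp in auto)
  have iLn: "integrable M Ln" by (rule integrableI_nonneg) (use nn en fn in auto)
  have iRp: "integrable M Rp" by (rule integrableI_nonneg) (use nn fp in auto)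
  have iRn: "integrable M Rn" by (rule integrableI_nonneg) (use nn fn in auto)
  have "integrable M (\<lambda>x. Lp x - Ln x)" by (rule Bochner_Integration.integrable_diff[OF iLp iLn])
  then show iL: "integrable M L" by (rule integrable_cong_AE_imp) (use dL in auto)
  have "integrable M (\<lambda>x. Rp x - Rn x)" by (rule Bochner_Integration.integrable_diff[OF iRp iRn])
  then show iR: "integrable M R" by (rule integrable_cong_AE_imp) (use dR in auto)
  have "(\<integral>x. L x \<partial>M) = (\<integral>x. Lp x - Ln x \<partial>M)" by (rule integral_cong_AE) (use dL in auto)
  also have "\<dots> = (\<integral>x. Lp x \<partial>M) - (\<integral>x. Ln x \<partial>M)" by (rule Bochner_Integration.integral_diff[OF iLp iLn])
  also have "(\<integral>x. Lp x \<partial>M) = (\<integral>x. Rp x \<partial>M)"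
    using integral_eq_nn_integral[of Lp M] integral_eq_nn_integral[of Rp M] nn ep by simp
  also have "(\<integral>x. Ln x \<partial>M) = (\<integral>x. Rn x \<partial>M)"
    using integral_eq_nn_integral[of Ln M] integral_eq_nn_integral[of Rn M] nn en by simp
  also have "(\<integral>x. Rp x \<partial>M) - (\<integral>x. Rn x \<partial>M) = (\<integral>x. Rp x - Rn x \<partial>M)"
    by (rule Bochner_Integration.integral_diff[OF iRp iRn, symmetric])
  also have "\<dots> = (\<integral>x. R x \<partial>M)" by (rule integral_cong_AE) (use dR in auto)
  finally show "(\<integral>x. L x \<partial>M) = (\<integral>x. R x \<partial>M)" .
qed

lemma ennreal_isum:
  assumes "\<And>i. i \<in> I \<Longrightarrow> 0 \<le> a i" "\<And>i. i \<in> I \<Longrightarrow> 0 \<le> b i"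
  shows "ennreal (indicator B x * (\<Sum>i\<in>I. a i * b i)) = indicator B x * (\<Sum>i\<in>I. ennreal (a i) * ennreal (b i))"
proof (cases "x \<in> B")
  case True
  have "ennreal (\<Sum>i\<in>I. a i * b i) = (\<Sum>i\<in>I. ennreal (a i * b i))"
    by (rule sum_ennreal[symmetric]) (use assms in auto)
  also have "\<dots> = (\<Sum>i\<in>I. ennreal (a i) * ennreal (b i))"
    by (rule sum.cong) (use assms in \<open>auto simp: ennreal_mult\<close>)
  finally show ?thesis using True by simp
qed simp

lemma subalgebra_trans: "subalgebra A B \<Longrightarrow> subalgebra B C \<Longrightarrow> subalgebra A C"
  unfolding subalgebra_def by auto

context WEL
begin

interpretation P: prob_space M by (rule M)

definition Sg :: "nat \<Rightarrow> ('x \<Rightarrow> real) \<Rightarrow> 'a \<Rightarrow> real" where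
  "Sg t g \<omega> = (\<Sum>i<N. w t i \<omega> * g (xi t i \<omega>))"
definition Sgh :: "nat \<Rightarrow> ('x \<Rightarrow> real) \<Rightarrow> 'a \<Rightarrow> real" where
  "Sgh t g \<omega> = (\<Sum>j<N. wh t j \<omega> * g (xih t j \<omega>))"

lemma Sg_measF: "g \<in> borel_measurable X \<Longrightarrow> Sg t g \<in> borel_measurable (F t)"
  unfolding Sg_def[abs_def]
proof (intro borel_measurable_sum)
  fix i assume "g \<in> borel_measurable X" "i \<in> {..<N}"
  then have [measurable]: "g \<in> borel_measurable X" "xi t i \<in> F t \<rightarrow>\<^sub>M X" "w t i \<in> borel_measurable (F t)"
    using xi_measF w_measF by auto
  show "(\<lambda>\<omega>. w t i \<omega> * g (xi t i \<omega>)) \<in> borel_measurable (F t)" by measurable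
qed

lemma Sgh_measFh: "g \<in> borel_measurable X \<Longrightarrow> Sgh t g \<in> borel_measurable (Fh t)"
  unfolding Sgh_def[abs_def]
proof (intro borel_measurable_sum)
  fix i assume "g \<in> borel_measurable X" "i \<in> {..<N}"
  then have [measurable]: "g \<in> borel_measurable X" "xih t i \<in> Fh t \<rightarrow>\<^sub>M X" "wh t i \<in> borel_measurable (Fh t)"
    using xih_measFh wh_measFh by auto
  show "(\<lambda>\<omega>. wh t i \<omega> * g (xih t i \<omega>)) \<in> borel_measurable (Fh t)" by measurable
qed

lemma Sg_meas[measurable]: "g \<in> borel_measurable X \<Longrightarrow> Sg t g \<in> borel_measurable M"
  by (rule measurable_from_subalg[OF subF Sg_measF])
lemma Sgh_meas[measurable]: "g \<in> borel_measurable X \<Longrightarrow> Sgh t g \<in> borel_measurable M"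
  by (rule measurable_from_subalg[OF subFh Sgh_measFh])

lemma subFF: "s \<le> t \<Longrightarrow> subalgebra (F t) (F s)"
proof (induction t)
  case 0 then show ?case by (simp add: subalgebra_def)
next
  case (Suc t)
  show ?case
  proof (cases "s = Suc t")
    case True then show ?thesis by (simp add: subalgebra_def)
  next
    case False
    then have "subalgebra (F t) (F s)" using Suc by auto
    then show ?thesis using subalgebra_trans[OF subalgebra_trans[OF subFFh subFhF]] by blast
  qed
qed

lemma subFhFle: "s \<le> t \<Longrightarrow> subalgebra (Fh t) (F s)"
  using subalgebra_trans[OF subFhF subFF] by blast

lemma wh_pos_AE: "AE \<omega> in M. \<forall>j<N. wh t j \<omega> > 0"
proof -
  have "AE \<omega> in M. \<omega> \<in> space M" by simp
  with children[of t] show ?thesis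
  proof eventually_elim
    case (elim \<omega>)
    show ?case
    proof (intro allI impI)
      fix j assume j: "j < N"
      then have p: "par t j \<omega> < N" and e: "wh t j \<omega> = w t (par t j \<omega>) \<omega> / C t (par t j \<omega>) \<omega>"
        using elim by auto
      show "wh t j \<omega> > 0" unfolding e using w_pos[OF p elim(2)] C_pos[OF p elim(2)] by simp
    qed
  qed
qed

lemma W1: "AE \<omega> in M. (\<Sum>i<N. w t i \<omega>) = 1"
proof (induction t)
  case 0
  have "AE \<omega> in M. \<omega> \<in> space M" by simp
  then show ?case
  proof eventually_elim
    case (elim \<omega>)
    then have "(\<Sum>i<N. w 0 i \<omega>) = (\<Sum>i<N. 1 / real N)" by (intro sum.cong) (auto simp: w0)
    then show ?case using N by simp
  qed
next
  case (Suc t)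
  have "AE \<omega> in M. \<omega> \<in> space M" by simp
  with Suc children[of t] bins[of t] show ?case
  proof eventually_elim
    case (elim \<omega>)
    have "(\<Sum>i<N. w (Suc t) i \<omega>) = (\<Sum>i<N. wh t i \<omega>)" by (intro sum.cong) (auto simp: w_Suc elim)
    also have "\<dots> = (\<Sum>i<N. w t i \<omega>)"
    proof (rule group_weights[where par="\<lambda>j. par t j \<omega>" and Nsp="\<lambda>i. Nsp t i \<omega>"
          and bin="\<lambda>i. bin t i \<omega>" and Nb="\<lambda>u. Nb t u \<omega>"])
      show "\<And>u. u \<in> (\<lambda>i. bin t i \<omega>) ` {..<N} \<Longrightarrow> 1 \<le> Nb t u \<omega>" using Nb1 elim by blast
    qed (use elim in auto)
    finally show ?case using elim by simp
  qed
qed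

lemma NEsum:
  assumes Z[measurable]: "Z \<in> borel_measurable (Fh t)" and g[measurable]: "g \<in> borel_measurable X"
  shows "(\<integral>\<^sup>+\<omega>. Z \<omega> * (\<Sum>j<N. ennreal (w (Suc t) j \<omega>) * g (xi (Suc t) j \<omega>)) \<partial>M)
       = (\<integral>\<^sup>+\<omega>. Z \<omega> * (\<Sum>j<N. ennreal (wh t j \<omega>) * Kp g (xih t j \<omega>)) \<partial>M)"
proof -
  have ZM[measurable]: "Z \<in> borel_measurable M" by (rule measurable_from_subalg[OF subFh Z])
  have "(\<integral>\<^sup>+\<omega>. Z \<omega> * (\<Sum>j<N. ennreal (w (Suc t) j \<omega>) * g (xi (Suc t) j \<omega>)) \<partial>M)
      = (\<integral>\<^sup>+\<omega>. (\<Sum>j<N. (Z \<omega> * ennreal (wh t j \<omega>)) * g (xi (Suc t) j \<omega>)) \<partial>M)"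
    by (rule nn_integral_cong) (auto simp: w_Suc sum_distrib_left mult_ac)
  also have "\<dots> = (\<Sum>j<N. \<integral>\<^sup>+\<omega>. (Z \<omega> * ennreal (wh t j \<omega>)) * g (xi (Suc t) j \<omega>) \<partial>M)"
  proof (rule nn_integral_sum)
    fix j assume "j \<in> {..<N}"
    then have [measurable]: "xi (Suc t) j \<in> M \<rightarrow>\<^sub>M X" "wh t j \<in> borel_measurable M"
      using xi_meas wh_meas by auto
    show "(\<lambda>\<omega>. (Z \<omega> * ennreal (wh t j \<omega>)) * g (xi (Suc t) j \<omega>)) \<in> borel_measurable M" by measurable
  qed
  also have "\<dots> = (\<Sum>j<N. \<integral>\<^sup>+\<omega>. (Z \<omega> * ennreal (wh t j \<omega>)) * Kp g (xih t j \<omega>) \<partial>M)"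
  proof (rule sum.cong[OF refl])
    fix j assume j: "j \<in> {..<N}"
    have [measurable]: "wh t j \<in> borel_measurable (Fh t)" using wh_measFh j by auto
    show "(\<integral>\<^sup>+\<omega>. (Z \<omega> * ennreal (wh t j \<omega>)) * g (xi (Suc t) j \<omega>) \<partial>M) = (\<integral>\<^sup>+\<omega>. (Z \<omega> * ennreal (wh t j \<omega>)) * Kp g (xih t j \<omega>) \<partial>M)"
      by (rule NE1) (use j in auto)
  qed
  also have "\<dots> = (\<integral>\<^sup>+\<omega>. (\<Sum>j<N. (Z \<omega> * ennreal (wh t j \<omega>)) * Kp g (xih t j \<omega>)) \<partial>M)"
  proof (rule nn_integral_sum[symmetric])
    fix j assume "j \<in> {..<N}"
    then have [measurable]: "xih t j \<in> M \<rightarrow>\<^sub>M X" "wh t j \<in> borel_measurable M"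
      using xih_meas wh_meas by auto
    show "(\<lambda>\<omega>. (Z \<omega> * ennreal (wh t j \<omega>)) * Kp g (xih t j \<omega>)) \<in> borel_measurable M" by measurable
  qed
  also have "\<dots> = (\<integral>\<^sup>+\<omega>. Z \<omega> * (\<Sum>j<N. ennreal (wh t j \<omega>) * Kp g (xih t j \<omega>)) \<partial>M)"
    by (simp add: sum_distrib_left mult_ac)
  finally show ?thesis .
qed

end

context WEL
begin

interpretation P: prob_space M by (rule M)

lemma Sg_diff: "Sg t (\<lambda>y. a y - b y) \<omega> = Sg t a \<omega> - Sg t b \<omega>"
  unfolding Sg_def by (simp add: right_diff_distrib sum_subtractf)
lemma Sgh_diff: "Sgh t (\<lambda>y. a y - b y) \<omega> = Sgh t a \<omega> - Sgh t b \<omega>"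
  unfolding Sgh_def by (simp add: right_diff_distrib sum_subtractf)

lemma SR:
  assumes g[measurable]: "g \<in> borel_measurable X" and fin: "mom t (\<lambda>y. ennreal \<bar>g y\<bar>) < \<infinity>"
    and B: "B \<in> sets (F t)"
  shows "integrable M (\<lambda>\<omega>. indicator B \<omega> * Sgh t g \<omega>)"
    and "integrable M (\<lambda>\<omega>. indicator B \<omega> * Sg t g \<omega>)"
    and "(\<integral>\<omega>. indicator B \<omega> * Sgh t g \<omega> \<partial>M) = (\<integral>\<omega>. indicator B \<omega> * Sg t g \<omega> \<partial>M)"
proof -
  have BM[measurable]: "B \<in> sets M" using B subF[of t] by (auto simp: subalgebra_def)
  have BF: "(indicator B :: 'a \<Rightarrow> ennreal) \<in> borel_measurable (F t)" using B by simp
  define gp where "gp = (\<lambda>y. max (g y) 0)"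
  define gn where "gn = (\<lambda>y. max (- g y) 0)"
  have [measurable]: "gp \<in> borel_measurable X" "gn \<in> borel_measurable X" unfolding gp_def gn_def by measurable
  have gdec: "g = (\<lambda>y. gp y - gn y)" unfolding gp_def gn_def by (auto simp: fun_eq_iff max_def)
  have nneq: "(\<integral>\<^sup>+\<omega>. ennreal (indicator B \<omega> * Sgh t h \<omega>) \<partial>M) = (\<integral>\<^sup>+\<omega>. ennreal (indicator B \<omega> * Sg t h \<omega>) \<partial>M)"
    if hm[measurable]: "h \<in> borel_measurable X" and h0: "\<And>y. 0 \<le> h y" for h
  proof -
    have "(\<integral>\<^sup>+\<omega>. ennreal (indicator B \<omega> * Sgh t h \<omega>) \<partial>M)
        = (\<integral>\<^sup>+\<omega>. indicator B \<omega> * (\<Sum>j<N. ennreal (wh t j \<omega>) * ennreal (h (xih t j \<omega>))) \<partial>M)"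
    proof (rule nn_integral_cong_AE)
      show "AE \<omega> in M. ennreal (indicator B \<omega> * Sgh t h \<omega>) = indicator B \<omega> * (\<Sum>j<N. ennreal (wh t j \<omega>) * ennreal (h (xih t j \<omega>)))"
        using wh_pos_AE[of t]
      proof eventually_elim
        case (elim \<omega>) then show ?case unfolding Sgh_def by (intro ennreal_isum) (auto simp: h0 less_imp_le)
      qed
    qed
    also have "\<dots> = (\<integral>\<^sup>+\<omega>. indicator B \<omega> * (\<Sum>i<N. ennreal (w t i \<omega>) * ennreal (h (xi t i \<omega>))) \<partial>M)"
      by (rule NS[where g="\<lambda>y. ennreal (h y)", OF BF]) simp
    also have "\<dots> = (\<integral>\<^sup>+\<omega>. ennreal (indicator B \<omega> * Sg t h \<omega>) \<partial>M)"
    proof (rule nn_integral_cong)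
      fix \<omega> assume "\<omega> \<in> space M"
      then show "indicator B \<omega> * (\<Sum>i<N. ennreal (w t i \<omega>) * ennreal (h (xi t i \<omega>))) = ennreal (indicator B \<omega> * Sg t h \<omega>)"
        unfolding Sg_def by (intro ennreal_isum[symmetric]) (auto simp: h0 w_nn)
    qed
    finally show ?thesis .
  qed
  have nnle: "(\<integral>\<^sup>+\<omega>. ennreal (indicator B \<omega> * Sg t h \<omega>) \<partial>M) \<le> mom t (\<lambda>y. ennreal \<bar>g y\<bar>)"
    if hm[measurable]: "h \<in> borel_measurable X" and h0: "\<And>y. 0 \<le> h y" and hg: "\<And>y. h y \<le> \<bar>g y\<bar>" for h
    unfolding mom_def
  proof (rule nn_integral_mono)
    fix \<omega> assume \<omega>: "\<omega> \<in> space M"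
    have "ennreal (indicator B \<omega> * Sg t h \<omega>) = indicator B \<omega> * (\<Sum>i<N. ennreal (w t i \<omega>) * ennreal (h (xi t i \<omega>)))"
      unfolding Sg_def using \<omega> by (intro ennreal_isum) (auto simp: h0 w_nn)
    also have "\<dots> \<le> 1 * (\<Sum>i<N. ennreal (w t i \<omega>) * ennreal (h (xi t i \<omega>)))"
      by (intro mult_right_mono) (auto split: split_indicator)
    also have "\<dots> \<le> (\<Sum>i<N. ennreal (w t i \<omega>) * ennreal \<bar>g (xi t i \<omega>)\<bar>)"
      by (simp, intro sum_mono mult_left_mono ennreal_leI hg) auto
    finally show "ennreal (indicator B \<omega> * Sg t h \<omega>) \<le> (\<Sum>i<N. ennreal (w t i \<omega>) * ennreal \<bar>g (xi t i \<omega>)\<bar>)" .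
  qed
  have gpg: "\<And>y. gp y \<le> \<bar>g y\<bar>" and gng: "\<And>y. gn y \<le> \<bar>g y\<bar>" unfolding gp_def gn_def by auto
  have gp0: "\<And>y. 0 \<le> gp y" and gn0: "\<And>y. 0 \<le> gn y" unfolding gp_def gn_def by auto
  have whn: "AE x in M. \<forall>j<N. 0 \<le> wh t j x" using wh_pos_AE[of t] by eventually_elim (auto intro: less_imp_le)
  have n1: "AE x in M. 0 \<le> indicator B x * Sgh t gp x"
    using whn by eventually_elim (auto simp: Sgh_def intro!: sum_nonneg mult_nonneg_nonneg gp0)
  have n2: "AE x in M. 0 \<le> indicator B x * Sgh t gn x"
    using whn by eventually_elim (auto simp: Sgh_def intro!: sum_nonneg mult_nonneg_nonneg gn0)
  have n3: "AE x in M. 0 \<le> indicator B x * Sg t gp x" and n4: "AE x in M. 0 \<le> indicator B x * Sg t gn x"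
    by (auto intro!: AE_I2 sum_nonneg mult_nonneg_nonneg simp: Sg_def gp0 gn0 w_nn)
  have dL: "AE x in M. indicator B x * Sgh t g x = indicator B x * Sgh t gp x - indicator B x * Sgh t gn x"
    by (subst gdec) (simp add: Sgh_diff right_diff_distrib)
  have dR: "AE x in M. indicator B x * Sg t g x = indicator B x * Sg t gp x - indicator B x * Sg t gn x"
    by (subst gdec) (simp add: Sg_diff right_diff_distrib)
  have ep: "(\<integral>\<^sup>+x. ennreal (indicator B x * Sgh t gp x) \<partial>M) = (\<integral>\<^sup>+x. ennreal (indicator B x * Sg t gp x) \<partial>M)"
    by (rule nneq) (auto simp: gp0)
  have en: "(\<integral>\<^sup>+x. ennreal (indicator B x * Sgh t gn x) \<partial>M) = (\<integral>\<^sup>+x. ennreal (indicator B x * Sg t gn x) \<partial>M)"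
    by (rule nneq) (auto simp: gn0)
  have fp: "(\<integral>\<^sup>+x. ennreal (indicator B x * Sg t gp x) \<partial>M) < \<infinity>"
    using nnle[of gp] gp0 gpg fin by (auto intro: le_less_trans)
  have fn: "(\<integral>\<^sup>+x. ennreal (indicator B x * Sg t gn x) \<partial>M) < \<infinity>"
    using nnle[of gn] gn0 gng fin by (auto intro: le_less_trans)
  have m1: "(\<lambda>x. indicator B x * Sgh t g x) \<in> borel_measurable M" by measurable
  have m2: "(\<lambda>x. indicator B x * Sg t g x) \<in> borel_measurable M" by measurable
  have m3: "(\<lambda>x. indicator B x * Sgh t gp x) \<in> borel_measurable M" by measurable
  have m4: "(\<lambda>x. indicator B x * Sgh t gn x) \<in> borel_measurable M" by measurable
  have m5: "(\<lambda>x. indicator B x * Sg t gp x) \<in> borel_measurable M" by measurable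
  have m6: "(\<lambda>x. indicator B x * Sg t gn x) \<in> borel_measurable M" by measurable
  note G = GL[OF m1 m2 m3 m4 m5 m6 n1 n2 n3 n4 dL dR ep en fp fn]
  show "integrable M (\<lambda>\<omega>. indicator B \<omega> * Sgh t g \<omega>)"
    and "integrable M (\<lambda>\<omega>. indicator B \<omega> * Sg t g \<omega>)"
    and "(\<integral>\<omega>. indicator B \<omega> * Sgh t g \<omega> \<partial>M) = (\<integral>\<omega>. indicator B \<omega> * Sg t g \<omega> \<partial>M)" by (rule G)+
qed

end

context WEL
begin

interpretation P: prob_space M by (rule M)

lemma Kfin_AE:
  assumes g[measurable]: "g \<in> borel_measurable X" and fin: "mom t (Kp (\<lambda>y. ennreal \<bar>g y\<bar>)) < \<infinity>"
  shows "AE \<omega> in M. \<forall>j<N. Kp (\<lambda>y. ennreal \<bar>g y\<bar>) (xih t j \<omega>) < \<infinity>"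
proof -
  define k where "k = Kp (\<lambda>y. ennreal \<bar>g y\<bar>)"
  have [measurable]: "k \<in> borel_measurable X" unfolding k_def by measurable
  have ms: "(\<lambda>\<omega>. \<Sum>j<N. ennreal (wh t j \<omega>) * k (xih t j \<omega>)) \<in> borel_measurable M"
  proof (rule borel_measurable_sum)
    fix j assume "j \<in> {..<N}"
    then have [measurable]: "xih t j \<in> M \<rightarrow>\<^sub>M X" "wh t j \<in> borel_measurable M"
      using xih_meas wh_meas by auto
    show "(\<lambda>\<omega>. ennreal (wh t j \<omega>) * k (xih t j \<omega>)) \<in> borel_measurable M" by measurable
  qed
  have "(\<integral>\<^sup>+\<omega>. 1 * (\<Sum>j<N. ennreal (wh t j \<omega>) * k (xih t j \<omega>)) \<partial>M) = (\<integral>\<^sup>+\<omega>. 1 * (\<Sum>i<N. ennreal (w t i \<omega>) * k (xi t i \<omega>)) \<partial>M)"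
    by (rule NS) auto
  then have "(\<integral>\<^sup>+\<omega>. (\<Sum>j<N. ennreal (wh t j \<omega>) * k (xih t j \<omega>)) \<partial>M) \<noteq> \<infinity>"
    using fin unfolding mom_def k_def by simp
  then have "AE \<omega> in M. (\<Sum>j<N. ennreal (wh t j \<omega>) * k (xih t j \<omega>)) \<noteq> \<infinity>"
    by (intro nn_integral_PInf_AE ms)
  with wh_pos_AE[of t] show ?thesis unfolding k_def[symmetric]
  proof eventually_elim
    case (elim \<omega>)
    show ?case
    proof (intro allI impI)
      fix j assume j: "j < N"
      have "ennreal (wh t j \<omega>) * k (xih t j \<omega>) \<le> (\<Sum>j<N. ennreal (wh t j \<omega>) * k (xih t j \<omega>))"
        by (rule member_le_sum) (use j in auto)
      then have "ennreal (wh t j \<omega>) * k (xih t j \<omega>) \<noteq> \<infinity>" using elim(2) by (auto simp: top_unique)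
      moreover have "ennreal (wh t j \<omega>) \<noteq> 0" using elim(1) j by auto
      ultimately show "k (xih t j \<omega>) < \<infinity>" by (auto simp: ennreal_mult_eq_top_iff less_top)
    qed
  qed
qed

lemma ER:
  assumes g[measurable]: "g \<in> borel_measurable X" and fin: "mom t (Kp (\<lambda>y. ennreal \<bar>g y\<bar>)) < \<infinity>"
    and B: "B \<in> sets (Fh t)"
  shows "integrable M (\<lambda>\<omega>. indicator B \<omega> * Sg (Suc t) g \<omega>)"
    and "integrable M (\<lambda>\<omega>. indicator B \<omega> * Sgh t (kernel_app K g) \<omega>)"
    and "(\<integral>\<omega>. indicator B \<omega> * Sg (Suc t) g \<omega> \<partial>M) = (\<integral>\<omega>. indicator B \<omega> * Sgh t (kernel_app K g) \<omega> \<partial>M)"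
proof -
  have BM[measurable]: "B \<in> sets M" using B subFh[of t] by (auto simp: subalgebra_def)
  have BF: "(indicator B :: 'a \<Rightarrow> ennreal) \<in> borel_measurable (Fh t)" using B by simp
  define gp where "gp = (\<lambda>y. max (g y) 0)"
  define gn where "gn = (\<lambda>y. max (- g y) 0)"
  have [measurable]: "gp \<in> borel_measurable X" "gn \<in> borel_measurable X" unfolding gp_def gn_def by measurable
  have gdec: "g = (\<lambda>y. gp y - gn y)" unfolding gp_def gn_def by (auto simp: fun_eq_iff max_def)
  have gpg: "\<And>y. gp y \<le> \<bar>g y\<bar>" and gng: "\<And>y. gn y \<le> \<bar>g y\<bar>" unfolding gp_def gn_def by auto
  have gp0: "\<And>y. 0 \<le> gp y" and gn0: "\<And>y. 0 \<le> gn y" unfolding gp_def gn_def by auto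
  note AEf = Kfin_AE[OF g fin]
  have AEs: "AE \<omega> in M. \<omega> \<in> space M" by simp
  have whn: "AE x in M. \<forall>j<N. 0 \<le> wh t j x" using wh_pos_AE[of t] by eventually_elim (auto intro: less_imp_le)
  have hkp: "\<And>x. x \<in> space X \<Longrightarrow> Kp (\<lambda>y. ennreal \<bar>g y\<bar>) x < \<infinity> \<Longrightarrow> ennreal (kernel_app K gp x) = Kp (\<lambda>y. ennreal (gp y)) x"
    using kapp_split(3)[OF _ g] unfolding gp_def by blast
  have hkn: "\<And>x. x \<in> space X \<Longrightarrow> Kp (\<lambda>y. ennreal \<bar>g y\<bar>) x < \<infinity> \<Longrightarrow> ennreal (kernel_app K gn x) = Kp (\<lambda>y. ennreal (gn y)) x"
    using kapp_split(4)[OF _ g] unfolding gn_def by blast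
  have mid: "(\<integral>\<^sup>+\<omega>. ennreal (indicator B \<omega> * Sgh t (kernel_app K h) \<omega>) \<partial>M)
      = (\<integral>\<^sup>+\<omega>. indicator B \<omega> * (\<Sum>j<N. ennreal (wh t j \<omega>) * Kp (\<lambda>y. ennreal (h y)) (xih t j \<omega>)) \<partial>M)"
    if hm[measurable]: "h \<in> borel_measurable X" and h0: "\<And>y. 0 \<le> h y"
      and hk: "\<And>x. x \<in> space X \<Longrightarrow> Kp (\<lambda>y. ennreal \<bar>g y\<bar>) x < \<infinity> \<Longrightarrow> ennreal (kernel_app K h x) = Kp (\<lambda>y. ennreal (h y)) x"
    for h
  proof (rule nn_integral_cong_AE)
    from AEf whn AEs show "AE \<omega> in M. ennreal (indicator B \<omega> * Sgh t (kernel_app K h) \<omega>)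
      = indicator B \<omega> * (\<Sum>j<N. ennreal (wh t j \<omega>) * Kp (\<lambda>y. ennreal (h y)) (xih t j \<omega>))"
    proof eventually_elim
      case (elim \<omega>)
      have "ennreal (indicator B \<omega> * Sgh t (kernel_app K h) \<omega>)
          = indicator B \<omega> * (\<Sum>j<N. ennreal (wh t j \<omega>) * ennreal (kernel_app K h (xih t j \<omega>)))"
        unfolding Sgh_def using elim xih_space
        by (intro ennreal_isum) (auto intro!: kapp_nonneg h0)
      also have "\<dots> = indicator B \<omega> * (\<Sum>j<N. ennreal (wh t j \<omega>) * Kp (\<lambda>y. ennreal (h y)) (xih t j \<omega>))"
        using elim xih_space by (auto intro!: sum.cong simp: hk)
      finally show ?case .
    qed
  qed
  have nneq: "(\<integral>\<^sup>+\<omega>. ennreal (indicator B \<omega> * Sg (Suc t) h \<omega>) \<partial>M)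
      = (\<integral>\<^sup>+\<omega>. ennreal (indicator B \<omega> * Sgh t (kernel_app K h) \<omega>) \<partial>M)"
    if hm[measurable]: "h \<in> borel_measurable X" and h0: "\<And>y. 0 \<le> h y"
      and hk: "\<And>x. x \<in> space X \<Longrightarrow> Kp (\<lambda>y. ennreal \<bar>g y\<bar>) x < \<infinity> \<Longrightarrow> ennreal (kernel_app K h x) = Kp (\<lambda>y. ennreal (h y)) x"
    for h
  proof -
    have "(\<integral>\<^sup>+\<omega>. ennreal (indicator B \<omega> * Sg (Suc t) h \<omega>) \<partial>M)
        = (\<integral>\<^sup>+\<omega>. indicator B \<omega> * (\<Sum>j<N. ennreal (w (Suc t) j \<omega>) * ennreal (h (xi (Suc t) j \<omega>))) \<partial>M)"
    proof (rule nn_integral_cong)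
      fix \<omega> assume "\<omega> \<in> space M"
      then show "ennreal (indicator B \<omega> * Sg (Suc t) h \<omega>) = indicator B \<omega> * (\<Sum>j<N. ennreal (w (Suc t) j \<omega>) * ennreal (h (xi (Suc t) j \<omega>)))"
        unfolding Sg_def by (intro ennreal_isum) (auto simp: h0 w_nn)
    qed
    also have "\<dots> = (\<integral>\<^sup>+\<omega>. indicator B \<omega> * (\<Sum>j<N. ennreal (wh t j \<omega>) * Kp (\<lambda>y. ennreal (h y)) (xih t j \<omega>)) \<partial>M)"
      by (rule NEsum[where g="\<lambda>y. ennreal (h y)", OF BF]) simp
    also have "\<dots> = (\<integral>\<^sup>+\<omega>. ennreal (indicator B \<omega> * Sgh t (kernel_app K h) \<omega>) \<partial>M)"
      by (rule mid[symmetric, OF hm h0 hk])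
    finally show ?thesis .
  qed
  have nnle: "(\<integral>\<^sup>+\<omega>. ennreal (indicator B \<omega> * Sgh t (kernel_app K h) \<omega>) \<partial>M) \<le> mom t (Kp (\<lambda>y. ennreal \<bar>g y\<bar>))"
    if hm[measurable]: "h \<in> borel_measurable X" and h0: "\<And>y. 0 \<le> h y" and hg: "\<And>y. h y \<le> \<bar>g y\<bar>"
      and hk: "\<And>x. x \<in> space X \<Longrightarrow> Kp (\<lambda>y. ennreal \<bar>g y\<bar>) x < \<infinity> \<Longrightarrow> ennreal (kernel_app K h x) = Kp (\<lambda>y. ennreal (h y)) x"
    for h
  proof -
    have "(\<integral>\<^sup>+\<omega>. ennreal (indicator B \<omega> * Sgh t (kernel_app K h) \<omega>) \<partial>M)
        = (\<integral>\<^sup>+\<omega>. indicator B \<omega> * (\<Sum>j<N. ennreal (wh t j \<omega>) * Kp (\<lambda>y. ennreal (h y)) (xih t j \<omega>)) \<partial>M)"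
      by (rule mid[OF hm h0 hk])
    also have "\<dots> \<le> (\<integral>\<^sup>+\<omega>. 1 * (\<Sum>j<N. ennreal (wh t j \<omega>) * Kp (\<lambda>y. ennreal \<bar>g y\<bar>) (xih t j \<omega>)) \<partial>M)"
    proof (rule nn_integral_mono)
      fix \<omega> assume \<omega>: "\<omega> \<in> space M"
      have "(\<Sum>j<N. ennreal (wh t j \<omega>) * Kp (\<lambda>y. ennreal (h y)) (xih t j \<omega>))
          \<le> (\<Sum>j<N. ennreal (wh t j \<omega>) * Kp (\<lambda>y. ennreal \<bar>g y\<bar>) (xih t j \<omega>))"
        using \<omega> xih_space by (intro sum_mono mult_left_mono Kp_mono ennreal_leI hg) auto
      then show "indicator B \<omega> * (\<Sum>j<N. ennreal (wh t j \<omega>) * Kp (\<lambda>y. ennreal (h y)) (xih t j \<omega>))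
          \<le> 1 * (\<Sum>j<N. ennreal (wh t j \<omega>) * Kp (\<lambda>y. ennreal \<bar>g y\<bar>) (xih t j \<omega>))"
        by (intro mult_mono) (auto split: split_indicator)
    qed
    also have "\<dots> = (\<integral>\<^sup>+\<omega>. 1 * (\<Sum>i<N. ennreal (w t i \<omega>) * Kp (\<lambda>y. ennreal \<bar>g y\<bar>) (xi t i \<omega>)) \<partial>M)"
      by (rule NS) auto
    also have "\<dots> = mom t (Kp (\<lambda>y. ennreal \<bar>g y\<bar>))" unfolding mom_def by simp
    finally show ?thesis .
  qed
  have n1: "AE x in M. 0 \<le> indicator B x * Sg (Suc t) gp x" and n2: "AE x in M. 0 \<le> indicator B x * Sg (Suc t) gn x"
    by (auto intro!: AE_I2 sum_nonneg mult_nonneg_nonneg simp: Sg_def gp0 gn0 w_nn)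
  have n3: "AE x in M. 0 \<le> indicator B x * Sgh t (kernel_app K gp) x"
    using whn AEs by eventually_elim (auto simp: Sgh_def xih_space intro!: sum_nonneg mult_nonneg_nonneg kapp_nonneg gp0)
  have n4: "AE x in M. 0 \<le> indicator B x * Sgh t (kernel_app K gn) x"
    using whn AEs by eventually_elim (auto simp: Sgh_def xih_space intro!: sum_nonneg mult_nonneg_nonneg kapp_nonneg gn0)
  have dL: "AE x in M. indicator B x * Sg (Suc t) g x = indicator B x * Sg (Suc t) gp x - indicator B x * Sg (Suc t) gn x"
    by (subst gdec) (simp add: Sg_diff right_diff_distrib)
  have dR: "AE x in M. indicator B x * Sgh t (kernel_app K g) x
      = indicator B x * Sgh t (kernel_app K gp) x - indicator B x * Sgh t (kernel_app K gn) x"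
    using AEf AEs
  proof eventually_elim
    case (elim \<omega>)
    have "Sgh t (kernel_app K g) \<omega> = Sgh t (\<lambda>y. kernel_app K gp y - kernel_app K gn y) \<omega>"
      unfolding Sgh_def
    proof (rule sum.cong[OF refl])
      fix j assume j: "j \<in> {..<N}"
      have x: "xih t j \<omega> \<in> space X" using xih_space elim j by auto
      show "wh t j \<omega> * kernel_app K g (xih t j \<omega>) = wh t j \<omega> * (kernel_app K gp (xih t j \<omega>) - kernel_app K gn (xih t j \<omega>))"
        using kapp_split(2)[OF x g] elim j unfolding gp_def gn_def by auto
    qed
    then show ?case by (simp add: Sgh_diff right_diff_distrib)
  qed
  have ep: "(\<integral>\<^sup>+x. ennreal (indicator B x * Sg (Suc t) gp x) \<partial>M) = (\<integral>\<^sup>+x. ennreal (indicator B x * Sgh t (kernel_app K gp) x) \<partial>M)"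
    by (rule nneq) (auto simp: gp0 hkp)
  have en: "(\<integral>\<^sup>+x. ennreal (indicator B x * Sg (Suc t) gn x) \<partial>M) = (\<integral>\<^sup>+x. ennreal (indicator B x * Sgh t (kernel_app K gn) x) \<partial>M)"
    by (rule nneq) (auto simp: gn0 hkn)
  have fp: "(\<integral>\<^sup>+x. ennreal (indicator B x * Sgh t (kernel_app K gp) x) \<partial>M) < \<infinity>"
    using nnle[of gp] gp0 gpg hkp fin by (auto intro: le_less_trans)
  have fn: "(\<integral>\<^sup>+x. ennreal (indicator B x * Sgh t (kernel_app K gn) x) \<partial>M) < \<infinity>"
    using nnle[of gn] gn0 gng hkn fin by (auto intro: le_less_trans)
  have m1: "(\<lambda>x. indicator B x * Sg (Suc t) g x) \<in> borel_measurable M" by measurable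
  have m2: "(\<lambda>x. indicator B x * Sgh t (kernel_app K g) x) \<in> borel_measurable M" by measurable
  have m3: "(\<lambda>x. indicator B x * Sg (Suc t) gp x) \<in> borel_measurable M" by measurable
  have m4: "(\<lambda>x. indicator B x * Sg (Suc t) gn x) \<in> borel_measurable M" by measurable
  have m5: "(\<lambda>x. indicator B x * Sgh t (kernel_app K gp) x) \<in> borel_measurable M" by measurable
  have m6: "(\<lambda>x. indicator B x * Sgh t (kernel_app K gn) x) \<in> borel_measurable M" by measurable
  note G = GL[OF m1 m2 m3 m4 m5 m6 n1 n2 n3 n4 dL dR ep en fp fn]
  show "integrable M (\<lambda>\<omega>. indicator B \<omega> * Sg (Suc t) g \<omega>)"
    and "integrable M (\<lambda>\<omega>. indicator B \<omega> * Sgh t (kernel_app K g) \<omega>)"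
    and "(\<integral>\<omega>. indicator B \<omega> * Sg (Suc t) g \<omega> \<partial>M) = (\<integral>\<omega>. indicator B \<omega> * Sgh t (kernel_app K g) \<omega> \<partial>M)"
    by (rule G)+
qed

end

context WEL
begin

interpretation P: prob_space M by (rule M)

lemma mom_integrand_meas: "g \<in> borel_measurable X \<Longrightarrow>
    (\<lambda>\<omega>. \<Sum>i<N. ennreal (w t i \<omega>) * g (xi t i \<omega>)) \<in> borel_measurable M"
proof (rule borel_measurable_sum)
  fix i assume "g \<in> borel_measurable X" "i \<in> {..<N}"
  then have [measurable]: "xi t i \<in> M \<rightarrow>\<^sub>M X" "w t i \<in> borel_measurable M" "g \<in> borel_measurable X"
    using xi_meas w_meas by auto
  show "(\<lambda>\<omega>. ennreal (w t i \<omega>) * g (xi t i \<omega>)) \<in> borel_measurable M" by measurable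
qed

lemma mom_add:
  assumes "a \<in> borel_measurable X" "b \<in> borel_measurable X"
  shows "mom t (\<lambda>y. a y + b y) = mom t a + mom t b"
proof -
  have "mom t (\<lambda>y. a y + b y) = (\<integral>\<^sup>+\<omega>. (\<Sum>i<N. ennreal (w t i \<omega>) * a (xi t i \<omega>)) + (\<Sum>i<N. ennreal (w t i \<omega>) * b (xi t i \<omega>)) \<partial>M)"
    unfolding mom_def by (simp add: distrib_left sum.distrib)
  also have "\<dots> = mom t a + mom t b" unfolding mom_def
    by (rule nn_integral_add) (use assms mom_integrand_meas in auto)
  finally show ?thesis .
qed

lemma mom_fin_AE:
  assumes g: "g \<in> borel_measurable X" and fin: "mom t g < \<infinity>"
  shows "AE \<omega> in M. \<forall>i<N. g (xi t i \<omega>) < \<infinity>"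
proof -
  have "AE \<omega> in M. (\<Sum>i<N. ennreal (w t i \<omega>) * g (xi t i \<omega>)) \<noteq> \<infinity>"
    using fin unfolding mom_def by (intro nn_integral_PInf_AE mom_integrand_meas g) auto
  moreover have "AE \<omega> in M. \<omega> \<in> space M" by simp
  ultimately show ?thesis
  proof eventually_elim
    case (elim \<omega>)
    show ?case
    proof (intro allI impI)
      fix i assume i: "i < N"
      have "ennreal (w t i \<omega>) * g (xi t i \<omega>) \<le> (\<Sum>i<N. ennreal (w t i \<omega>) * g (xi t i \<omega>))"
        by (rule member_le_sum) (use i in auto)
      then have "ennreal (w t i \<omega>) * g (xi t i \<omega>) \<noteq> \<infinity>" using elim(1) by (auto simp: top_unique)
      moreover have "w t i \<omega> > 0" by (rule w_pos[OF i elim(2)])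
      then have "ennreal (w t i \<omega>) \<noteq> 0" by simp
      ultimately show "g (xi t i \<omega>) < \<infinity>" by (auto simp: ennreal_mult_eq_top_iff less_top)
    qed
  qed
qed

lemma space_in_F: "space M \<in> sets (F t)" using subF[of t] by (metis sets.top subalgebra_def)
lemma space_in_Fh: "space M \<in> sets (Fh t)" using subFh[of t] by (metis sets.top subalgebra_def)

lemma SR_int:
  assumes g: "g \<in> borel_measurable X" and fin: "mom t (\<lambda>y. ennreal \<bar>g y\<bar>) < \<infinity>"
  shows "integrable M (Sg t g)" "integrable M (Sgh t g)"
proof -
  have e1: "integrable M (\<lambda>\<omega>. indicator (space M) \<omega> * Sg t g \<omega>) = integrable M (Sg t g)"
    by (rule Bochner_Integration.integrable_cong) auto
  have e2: "integrable M (\<lambda>\<omega>. indicator (space M) \<omega> * Sgh t g \<omega>) = integrable M (Sgh t g)"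
    by (rule Bochner_Integration.integrable_cong) auto
  show "integrable M (Sg t g)" "integrable M (Sgh t g)"
    using SR(1,2)[OF g fin space_in_F] e1 e2 by auto
qed

lemma ER_int:
  assumes g: "g \<in> borel_measurable X" and fin: "mom t (Kp (\<lambda>y. ennreal \<bar>g y\<bar>)) < \<infinity>"
  shows "integrable M (Sg (Suc t) g)" "integrable M (Sgh t (kernel_app K g))"
proof -
  have e1: "integrable M (\<lambda>\<omega>. indicator (space M) \<omega> * Sg (Suc t) g \<omega>) = integrable M (Sg (Suc t) g)"
    by (rule Bochner_Integration.integrable_cong) auto
  have e2: "integrable M (\<lambda>\<omega>. indicator (space M) \<omega> * Sgh t (kernel_app K g) \<omega>) = integrable M (Sgh t (kernel_app K g))"
    by (rule Bochner_Integration.integrable_cong) auto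
  show "integrable M (Sg (Suc t) g)" "integrable M (Sgh t (kernel_app K g))"
    using ER(1,2)[OF g fin space_in_Fh] e1 e2 by auto
qed

end

locale WEL2 = WEL +
  fixes \<mu> and f and T :: nat
  assumes f[measurable]: "f \<in> borel_measurable X"
    and mu_sets: "sets \<mu> = sets X"
    and f_int: "\<And>t. t \<le> T - 1 \<Longrightarrow> (\<integral>\<^sup>+ x. ennreal \<bar>f x\<bar> \<partial>(meas_kpow \<mu>0 K t)) < \<infinity>"
    and T: "T \<ge> 1"
begin

interpretation P: prob_space M by (rule M)

definition "c = (\<integral>z. f z \<partial>\<mu>)"
definition "H t = hT K \<mu> f T t"
definition "kp n = kernel_pow K n (\<lambda>y. f y - c)"

lemma H_eq: "H t x = (\<Sum>s\<in>{t..<T}. kp (s - t) x)"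
  unfolding H_def hT_def kp_def c_def by simp

lemma kp_meas[measurable]: "kp n \<in> borel_measurable X"
  unfolding kp_def by measurable

lemma H_meas[measurable]: "H t \<in> borel_measurable X"
  unfolding H_def hT_def[abs_def] by (fold c_def kp_def) measurable

lemma mom_f: "s < T \<Longrightarrow> mom s (\<lambda>y. ennreal \<bar>f y\<bar>) < \<infinity>"
  using f_int[of s] mom_kpow[of "\<lambda>y. ennreal \<bar>f y\<bar>" s] by simp

lemma kp_bound: "y \<in> space X \<Longrightarrow> ennreal \<bar>kp n y\<bar> \<le> (Kp ^^ n) (\<lambda>y. ennreal \<bar>f y\<bar>) y + ennreal \<bar>c\<bar>"
proof -
  assume y: "y \<in> space X"
  have "ennreal \<bar>kp n y\<bar> \<le> (Kp ^^ n) (\<lambda>y. ennreal \<bar>f y - c\<bar>) y"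
    unfolding kp_def by (rule kpow_bound[OF y])
  also have "\<dots> \<le> (Kp ^^ n) (\<lambda>y. ennreal \<bar>f y\<bar> + ennreal \<bar>c\<bar>) y"
  proof (rule Kpn_mono[OF _ y])
    fix z
    have "ennreal \<bar>f z - c\<bar> \<le> ennreal (\<bar>f z\<bar> + \<bar>c\<bar>)" by (intro ennreal_leI abs_triangle_ineq4)
    then show "ennreal \<bar>f z - c\<bar> \<le> ennreal \<bar>f z\<bar> + ennreal \<bar>c\<bar>" by simp
  qed
  also have "\<dots> = (Kp ^^ n) (\<lambda>y. ennreal \<bar>f y\<bar>) y + ennreal \<bar>c\<bar>"
    by (rule Kpn_add_const[OF _ y]) simp
  finally show ?thesis .
qed

lemma HB: "mom t (\<lambda>y. ennreal \<bar>H t y\<bar>) < \<infinity>"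
proof -
  have "mom t (\<lambda>y. ennreal \<bar>H t y\<bar>) \<le> mom t (\<lambda>y. \<Sum>s\<in>{t..<T}. (Kp ^^ (s - t)) (\<lambda>y. ennreal \<bar>f y\<bar>) y + ennreal \<bar>c\<bar>)"
  proof (rule mom_mono)
    fix y assume y: "y \<in> space X"
    have "ennreal \<bar>H t y\<bar> \<le> ennreal (\<Sum>s\<in>{t..<T}. \<bar>kp (s - t) y\<bar>)"
      unfolding H_eq by (intro ennreal_leI sum_abs)
    also have "\<dots> = (\<Sum>s\<in>{t..<T}. ennreal \<bar>kp (s - t) y\<bar>)" by (rule sum_ennreal[symmetric]) simp
    also have "\<dots> \<le> (\<Sum>s\<in>{t..<T}. (Kp ^^ (s - t)) (\<lambda>y. ennreal \<bar>f y\<bar>) y + ennreal \<bar>c\<bar>)"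
      by (intro sum_mono kp_bound y)
    finally show "ennreal \<bar>H t y\<bar> \<le> (\<Sum>s\<in>{t..<T}. (Kp ^^ (s - t)) (\<lambda>y. ennreal \<bar>f y\<bar>) y + ennreal \<bar>c\<bar>)" .
  qed
  also have "\<dots> = (\<Sum>s\<in>{t..<T}. mom t (\<lambda>y. (Kp ^^ (s - t)) (\<lambda>y. ennreal \<bar>f y\<bar>) y + ennreal \<bar>c\<bar>))"
    by (rule mom_sum) auto
  also have "\<dots> = (\<Sum>s\<in>{t..<T}. mom s (\<lambda>y. ennreal \<bar>f y\<bar>) + ennreal \<bar>c\<bar>)"
  proof (rule sum.cong[OF refl])
    fix s assume s: "s \<in> {t..<T}"
    have "mom t (\<lambda>y. (Kp ^^ (s - t)) (\<lambda>y. ennreal \<bar>f y\<bar>) y + ennreal \<bar>c\<bar>)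
        = mom t ((Kp ^^ (s - t)) (\<lambda>y. ennreal \<bar>f y\<bar>)) + mom t (\<lambda>_. ennreal \<bar>c\<bar>)"
      by (rule mom_add) auto
    also have "mom t ((Kp ^^ (s - t)) (\<lambda>y. ennreal \<bar>f y\<bar>)) = mom (t + (s - t)) (\<lambda>y. ennreal \<bar>f y\<bar>)"
      by (rule mom_Kpn) simp
    also have "t + (s - t) = s" using s by simp
    finally show "mom t (\<lambda>y. (Kp ^^ (s - t)) (\<lambda>y. ennreal \<bar>f y\<bar>) y + ennreal \<bar>c\<bar>) = mom s (\<lambda>y. ennreal \<bar>f y\<bar>) + ennreal \<bar>c\<bar>"
      by (simp add: mom_const)
  qed
  also have "\<dots> < \<infinity>" using mom_f by (simp add: less_top[symmetric])
  finally show ?thesis .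
qed

end

lemma ind_int: "B \<in> sets M \<Longrightarrow> integrable M U \<Longrightarrow> integrable M (\<lambda>x. indicator B x * U x :: real)"
  using integrable_real_mult_indicator[of B M U] by (simp add: mult.commute)

context WEL2
begin

interpretation P: prob_space M by (rule M)

lemma kp_Suc: "kp (Suc n) = kernel_app K (kp n)"
  unfolding kp_def by (rule kpow_Suc)

lemma kp_0: "kp 0 x = f x - c"
  unfolding kp_def by (simp add: kpow_0)

lemma HID:
  assumes x: "x \<in> space X" and t: "t < T"
    and fin: "\<And>m. 1 \<le> m \<Longrightarrow> m \<le> T - 1 - t \<Longrightarrow> (Kp ^^ m) (\<lambda>y. ennreal \<bar>f y\<bar>) x < \<infinity>"
  shows "H t x = (f x - c) + kernel_app K (H (Suc t)) x"
proof -
  have "H t x = kp 0 x + (\<Sum>s\<in>{Suc t..<T}. kp (s - t) x)"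
    unfolding H_eq using t by (subst sum.atLeast_Suc_lessThan) auto
  also have "kp 0 x = f x - c" by (rule kp_0)
  also have "(\<Sum>s\<in>{Suc t..<T}. kp (s - t) x) = kernel_app K (H (Suc t)) x"
  proof -
    have int: "integrable (K x) (kp (s - Suc t))" if s: "s \<in> {Suc t..<T}" for s
    proof (rule kapp_split(1)[OF x kp_meas])
      have "Kp (\<lambda>y. ennreal \<bar>kp (s - Suc t) y\<bar>) x \<le> Kp (\<lambda>y. (Kp ^^ (s - Suc t)) (\<lambda>y. ennreal \<bar>f y\<bar>) y + ennreal \<bar>c\<bar>) x"
        by (rule Kp_mono[OF _ x]) (rule kp_bound)
      also have "\<dots> = (Kp ^^ Suc (s - Suc t)) (\<lambda>y. ennreal \<bar>f y\<bar>) x + ennreal \<bar>c\<bar>"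
        by (subst Kp_add_const[OF x]) auto
      also have "\<dots> < \<infinity>"
      proof -
        have "1 \<le> Suc (s - Suc t)" "Suc (s - Suc t) \<le> T - 1 - t" using s by auto
        then have "(Kp ^^ Suc (s - Suc t)) (\<lambda>y. ennreal \<bar>f y\<bar>) x < \<infinity>" by (rule fin)
        then show ?thesis by (simp add: less_top[symmetric])
      qed
      finally show "Kp (\<lambda>y. ennreal \<bar>kp (s - Suc t) y\<bar>) x < \<infinity>" .
    qed
    have "kernel_app K (H (Suc t)) x = (\<integral>y. (\<Sum>s\<in>{Suc t..<T}. kp (s - Suc t) y) \<partial>K x)"
      unfolding kernel_app_def H_eq ..
    also have "\<dots> = (\<Sum>s\<in>{Suc t..<T}. \<integral>y. kp (s - Suc t) y \<partial>K x)"
      by (rule Bochner_Integration.integral_sum) (rule int)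
    also have "\<dots> = (\<Sum>s\<in>{Suc t..<T}. kp (s - t) x)"
    proof (rule sum.cong[OF refl])
      fix s assume s: "s \<in> {Suc t..<T}"
      then have "s - t = Suc (s - Suc t)" by auto
      then show "(\<integral>y. kp (s - Suc t) y \<partial>K x) = kp (s - t) x"
        by (simp add: kp_Suc kernel_app_def)
    qed
    finally show ?thesis by simp
  qed
  finally show ?thesis .
qed

lemma ID:
  assumes t: "t < T"
  shows "AE \<omega> in M. Sg t (H t) \<omega> = Sg t f \<omega> - c + Sg t (kernel_app K (H (Suc t))) \<omega>"
proof -
  have "\<forall>m\<in>{1..T - 1 - t}. AE \<omega> in M. \<forall>i<N. (Kp ^^ m) (\<lambda>y. ennreal \<bar>f y\<bar>) (xi t i \<omega>) < \<infinity>"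
  proof
    fix m assume m: "m \<in> {1..T - 1 - t}"
    show "AE \<omega> in M. \<forall>i<N. (Kp ^^ m) (\<lambda>y. ennreal \<bar>f y\<bar>) (xi t i \<omega>) < \<infinity>"
    proof (rule mom_fin_AE)
      show "mom t ((Kp ^^ m) (\<lambda>y. ennreal \<bar>f y\<bar>)) < \<infinity>"
      proof -
        have "t + m < T" using m t by auto
        then show ?thesis using mom_Kpn[of "\<lambda>y. ennreal \<bar>f y\<bar>" t m] mom_f[of "t + m"] by simp
      qed
    qed simp
  qed
  then have A1: "AE \<omega> in M. \<forall>m\<in>{1..T - 1 - t}. \<forall>i<N. (Kp ^^ m) (\<lambda>y. ennreal \<bar>f y\<bar>) (xi t i \<omega>) < \<infinity>"
    by (intro eventually_ball_finite) auto
  have "AE \<omega> in M. \<omega> \<in> space M" by simp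
  with A1 W1[of t] show ?thesis
  proof eventually_elim
    case (elim \<omega>)
    have "Sg t (H t) \<omega> = (\<Sum>i<N. w t i \<omega> * ((f (xi t i \<omega>) - c) + kernel_app K (H (Suc t)) (xi t i \<omega>)))"
      unfolding Sg_def
    proof (rule sum.cong[OF refl])
      fix i assume i: "i \<in> {..<N}"
      have "H t (xi t i \<omega>) = (f (xi t i \<omega>) - c) + kernel_app K (H (Suc t)) (xi t i \<omega>)"
        by (rule HID[OF _ t]) (use xi_space elim i in auto)
      then show "w t i \<omega> * H t (xi t i \<omega>) = w t i \<omega> * ((f (xi t i \<omega>) - c) + kernel_app K (H (Suc t)) (xi t i \<omega>))"
        by simp
    qed
    also have "\<dots> = Sg t f \<omega> - c * (\<Sum>i<N. w t i \<omega>) + Sg t (kernel_app K (H (Suc t))) \<omega>"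
      unfolding Sg_def by (simp add: algebra_simps sum.distrib sum_subtractf sum_distrib_left)
    finally show ?case using elim(2) by simp
  qed
qed

end

context WEL2
begin

interpretation P: prob_space M by (rule M)

definition "S = (\<lambda>\<omega>. (1 / real T) * (\<Sum>s<T. \<Sum>i<N. w s i \<omega> * f (xi s i \<omega>)))"
definition "Vt t \<omega> = (\<Sum>s<t. Sg s f \<omega>) + Sg t (H t) \<omega> + real (T - t) * c"
definition "Vh t \<omega> = (\<Sum>s<Suc t. Sg s f \<omega>) + Sgh t (kernel_app K (H (Suc t))) \<omega> + real (T - Suc t) * c"

lemma S_eq: "S = (\<lambda>\<omega>. (1 / real T) * (\<Sum>s<T. Sg s f \<omega>))"
  unfolding S_def Sg_def ..

lemma A_int: "s < T \<Longrightarrow> integrable M (Sg s f)"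
  by (rule SR_int(1)[OF f mom_f])

lemma S_int: "integrable M S"
  unfolding S_eq by (intro integrable_mult_right Bochner_Integration.integrable_sum A_int) auto

lemma A_measF: "s \<le> t \<Longrightarrow> Sg s f \<in> borel_measurable (F t)"
  by (rule measurable_from_subalg[OF subFF Sg_measF[OF f]])

lemma A_measFh: "s \<le> t \<Longrightarrow> Sg s f \<in> borel_measurable (Fh t)"
  by (rule measurable_from_subalg[OF subFhFle Sg_measF[OF f]])

lemma S_meas: "S \<in> borel_measurable (F (T - 1))"
  unfolding S_eq
proof (intro borel_measurable_times borel_measurable_const borel_measurable_sum)
  fix s assume "s \<in> {..<T}"
  then show "Sg s f \<in> borel_measurable (F (T - 1))" by (intro A_measF) auto
qed

lemma KH_fin: "mom t (Kp (\<lambda>y. ennreal \<bar>H (Suc t) y\<bar>)) < \<infinity>"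
  using mom_Suc[of "\<lambda>y. ennreal \<bar>H (Suc t) y\<bar>" t] HB[of "Suc t"] by simp

lemma KH_fin2: "mom t (\<lambda>y. ennreal \<bar>kernel_app K (H (Suc t)) y\<bar>) < \<infinity>"
proof -
  have "mom t (\<lambda>y. ennreal \<bar>kernel_app K (H (Suc t)) y\<bar>) \<le> mom t (Kp (\<lambda>y. ennreal \<bar>H (Suc t) y\<bar>))"
    by (rule mom_mono) (rule kapp_bound)
  then show ?thesis using KH_fin by (auto intro: le_less_trans)
qed

lemma Vt_int: "t < T \<Longrightarrow> integrable M (Vt t)"
  unfolding Vt_def[abs_def]
  by (intro Bochner_Integration.integrable_add Bochner_Integration.integrable_sum A_int SR_int(1)[OF H_meas HB]
      P.integrable_const) auto

lemma Vh_int: "t < T \<Longrightarrow> integrable M (Vh t)"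
  unfolding Vh_def[abs_def]
  by (intro Bochner_Integration.integrable_add Bochner_Integration.integrable_sum A_int ER_int(2)[OF H_meas KH_fin]
      P.integrable_const) auto

lemma Vt_meas: "Vt t \<in> borel_measurable (F t)"
  unfolding Vt_def[abs_def]
  by (intro borel_measurable_add borel_measurable_sum borel_measurable_const A_measF Sg_measF H_meas) auto

lemma Vh_meas: "Vh t \<in> borel_measurable (Fh t)"
  unfolding Vh_def[abs_def]
  by (intro borel_measurable_add borel_measurable_sum borel_measurable_const A_measFh Sgh_measFh kapp_meas H_meas) auto

lemma Vt_measM[measurable]: "Vt t \<in> borel_measurable M"
  by (rule measurable_from_subalg[OF subF Vt_meas])
lemma Vh_measM[measurable]: "Vh t \<in> borel_measurable M"
  by (rule measurable_from_subalg[OF subFh Vh_meas])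

lemma VtVh: "Vt (Suc t) \<omega> = Vh t \<omega> + (Sg (Suc t) (H (Suc t)) \<omega> - Sgh t (kernel_app K (H (Suc t))) \<omega>)"
  unfolding Vt_def Vh_def by simp

lemma VhVt:
  assumes t: "t < T"
  shows "AE \<omega> in M. Vh t \<omega> = Vt t \<omega> + (Sgh t (kernel_app K (H (Suc t))) \<omega> - Sg t (kernel_app K (H (Suc t))) \<omega>)"
  using ID[OF t]
proof eventually_elim
  case (elim \<omega>)
  have "real (T - t) = real (T - Suc t) + 1" using t by simp
  then show ?case unfolding Vt_def Vh_def elim by (simp add: algebra_simps)
qed

lemma setint_div: "(\<integral>x\<in>B. U x / real T \<partial>M) = (\<integral>x. indicator B x * U x \<partial>M) / real T"
proof -
  have "(\<integral>x\<in>B. U x / real T \<partial>M) = (\<integral>x. indicator B x * U x / real T \<partial>M)"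
    unfolding set_lebesgue_integral_def by simp
  also have "\<dots> = (\<integral>x. indicator B x * U x \<partial>M) / real T" by (rule integral_divide_zero)
  finally show ?thesis .
qed

end

context WEL2
begin

interpretation P: prob_space M by (rule M)

lemma C1_base: "AE \<omega> in M. real_cond_exp M (F (T - 1)) S \<omega> = Vt (T - 1) \<omega> / real T"
proof -
  interpret S1: sigma_finite_subalgebra M "F (T - 1)" by (rule sfF)
  have a: "AE \<omega> in M. real_cond_exp M (F (T - 1)) S \<omega> = S \<omega>"
    by (rule S1.real_cond_exp_F_meas[OF S_int S_meas])
  have HT: "H T = (\<lambda>_. 0)" by (simp add: H_eq fun_eq_iff)
  have KHT: "kernel_app K (H T) = (\<lambda>_. 0)" unfolding HT by (simp add: kernel_app_def fun_eq_iff)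
  have T1: "Suc (T - 1) = T" using T by simp
  have Tlt: "T - 1 < T" using T by simp
  have b: "AE \<omega> in M. S \<omega> = Vt (T - 1) \<omega> / real T"
    using ID[OF Tlt]
  proof eventually_elim
    case (elim \<omega>)
    have z: "Sg (T - 1) (kernel_app K (H (Suc (T - 1)))) \<omega> = 0"
      unfolding T1 KHT by (simp add: Sg_def)
    have "(\<Sum>s<T. Sg s f \<omega>) = (\<Sum>s<T - 1. Sg s f \<omega>) + Sg (T - 1) f \<omega>"
      using T1 by (metis sum.lessThan_Suc)
    moreover have "real (T - (T - 1)) = 1" using T by simp
    ultimately have "Vt (T - 1) \<omega> = (\<Sum>s<T. Sg s f \<omega>)"
      unfolding Vt_def using elim z by simp
    then show ?case unfolding S_eq by simp
  qed
  from a b show ?thesis by eventually_elim simp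
qed

lemma C2_from_C1:
  assumes t: "Suc t < T" and IH: "AE \<omega> in M. real_cond_exp M (F (Suc t)) S \<omega> = Vt (Suc t) \<omega> / real T"
  shows "AE \<omega> in M. real_cond_exp M (Fh t) S \<omega> = Vh t \<omega> / real T"
proof -
  interpret S1: sigma_finite_subalgebra M "F (Suc t)" by (rule sfF)
  interpret S2: sigma_finite_subalgebra M "Fh t" by (rule sfFh)
  have [measurable]: "Vh t \<in> borel_measurable (Fh t)" by (rule Vh_meas)
  show ?thesis
  proof (rule S2.real_cond_exp_charact)
    fix B assume B: "B \<in> sets (Fh t)"
    have B1: "B \<in> sets (F (Suc t))" using B subFFh[of t] by (auto simp: subalgebra_def)
    have BM[measurable]: "B \<in> sets M" using B subFh[of t] by (auto simp: subalgebra_def)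
    have "(\<integral>x\<in>B. S x \<partial>M) = (\<integral>x\<in>B. real_cond_exp M (F (Suc t)) S x \<partial>M)"
      by (rule S1.real_cond_exp_intA[OF S_int B1])
    also have "\<dots> = (\<integral>x\<in>B. Vt (Suc t) x / real T \<partial>M)"
      unfolding set_lebesgue_integral_def
      by (rule integral_cong_AE) (use IH in \<open>auto elim!: AE_mp\<close>)
    also have "\<dots> = (\<integral>x. indicator B x * Vt (Suc t) x \<partial>M) / real T" by (rule setint_div)
    also have "(\<integral>x. indicator B x * Vt (Suc t) x \<partial>M) = (\<integral>x. indicator B x * Vh t x \<partial>M)"
    proof -
      note ER3 = ER[OF H_meas KH_fin B]
      have iVh: "integrable M (\<lambda>x. indicator B x * Vh t x)" by (rule ind_int[OF BM Vh_int]) (use t in simp)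
      have "(\<integral>x. indicator B x * Vt (Suc t) x \<partial>M)
          = (\<integral>x. indicator B x * Vh t x + (indicator B x * Sg (Suc t) (H (Suc t)) x
                - indicator B x * Sgh t (kernel_app K (H (Suc t))) x) \<partial>M)"
        by (rule Bochner_Integration.integral_cong) (auto simp: VtVh algebra_simps)
      also have "\<dots> = (\<integral>x. indicator B x * Vh t x \<partial>M) + (\<integral>x. indicator B x * Sg (Suc t) (H (Suc t)) x
                - indicator B x * Sgh t (kernel_app K (H (Suc t))) x \<partial>M)"
        by (rule Bochner_Integration.integral_add[OF iVh Bochner_Integration.integrable_diff[OF ER3(1,2)]])
      also have "(\<integral>x. indicator B x * Sg (Suc t) (H (Suc t)) x - indicator B x * Sgh t (kernel_app K (H (Suc t))) x \<partial>M)
          = (\<integral>x. indicator B x * Sg (Suc t) (H (Suc t)) x \<partial>M) - (\<integral>x. indicator B x * Sgh t (kernel_app K (H (Suc t))) x \<partial>M)"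
        by (rule Bochner_Integration.integral_diff[OF ER3(1,2)])
      also have "\<dots> = 0" using ER3(3) by simp
      finally show ?thesis by simp
    qed
    also have "(\<integral>x. indicator B x * Vh t x \<partial>M) / real T = (\<integral>x\<in>B. Vh t x / real T \<partial>M)"
      by (rule setint_div[symmetric])
    finally show "(\<integral>x\<in>B. S x \<partial>M) = (\<integral>x\<in>B. Vh t x / real T \<partial>M)" .
  next
    show "integrable M S" by (rule S_int)
    show "integrable M (\<lambda>x. Vh t x / real T)" using Vh_int[of t] t by auto
    show "(\<lambda>x. Vh t x / real T) \<in> borel_measurable (Fh t)" by measurable
  qed
qed

lemma C1_from_C2:
  assumes t: "Suc t < T" and IH: "AE \<omega> in M. real_cond_exp M (Fh t) S \<omega> = Vh t \<omega> / real T"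
  shows "AE \<omega> in M. real_cond_exp M (F t) S \<omega> = Vt t \<omega> / real T"
proof -
  interpret S1: sigma_finite_subalgebra M "F t" by (rule sfF)
  interpret S2: sigma_finite_subalgebra M "Fh t" by (rule sfFh)
  have [measurable]: "Vt t \<in> borel_measurable (F t)" by (rule Vt_meas)
  show ?thesis
  proof (rule S1.real_cond_exp_charact)
    fix B assume B: "B \<in> sets (F t)"
    have B1: "B \<in> sets (Fh t)" using B subFhF[of t] by (auto simp: subalgebra_def)
    have BM[measurable]: "B \<in> sets M" using B subF[of t] by (auto simp: subalgebra_def)
    have "(\<integral>x\<in>B. S x \<partial>M) = (\<integral>x\<in>B. real_cond_exp M (Fh t) S x \<partial>M)"
      by (rule S2.real_cond_exp_intA[OF S_int B1])
    also have "\<dots> = (\<integral>x\<in>B. Vh t x / real T \<partial>M)"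
      unfolding set_lebesgue_integral_def
      by (rule integral_cong_AE) (use IH in \<open>auto elim!: AE_mp\<close>)
    also have "\<dots> = (\<integral>x. indicator B x * Vh t x \<partial>M) / real T" by (rule setint_div)
    also have "(\<integral>x. indicator B x * Vh t x \<partial>M) = (\<integral>x. indicator B x * Vt t x \<partial>M)"
    proof -
      note SR3 = SR[OF kapp_meas[OF H_meas] KH_fin2 B]
      have iVt: "integrable M (\<lambda>x. indicator B x * Vt t x)" by (rule ind_int[OF BM Vt_int]) (use t in simp)
      have "(\<integral>x. indicator B x * Vh t x \<partial>M)
          = (\<integral>x. indicator B x * Vt t x + (indicator B x * Sgh t (kernel_app K (H (Suc t))) x
                - indicator B x * Sg t (kernel_app K (H (Suc t))) x) \<partial>M)"
      proof (rule integral_cong_AE)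
        show "AE x in M. indicator B x * Vh t x = indicator B x * Vt t x + (indicator B x * Sgh t (kernel_app K (H (Suc t))) x
                - indicator B x * Sg t (kernel_app K (H (Suc t))) x)"
        proof -
          have t': "t < T" using t by simp
          show ?thesis using VhVt[OF t']
          proof eventually_elim
            case (elim x) show ?case unfolding elim by (simp add: algebra_simps)
          qed
        qed
      qed measurable
      also have "\<dots> = (\<integral>x. indicator B x * Vt t x \<partial>M) + (\<integral>x. indicator B x * Sgh t (kernel_app K (H (Suc t))) x
                - indicator B x * Sg t (kernel_app K (H (Suc t))) x \<partial>M)"
        by (rule Bochner_Integration.integral_add[OF iVt Bochner_Integration.integrable_diff[OF SR3(1,2)]])
      also have "(\<integral>x. indicator B x * Sgh t (kernel_app K (H (Suc t))) x - indicator B x * Sg t (kernel_app K (H (Suc t))) x \<partial>M)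
          = (\<integral>x. indicator B x * Sgh t (kernel_app K (H (Suc t))) x \<partial>M) - (\<integral>x. indicator B x * Sg t (kernel_app K (H (Suc t))) x \<partial>M)"
        by (rule Bochner_Integration.integral_diff[OF SR3(1,2)])
      also have "\<dots> = 0" using SR3(3) by simp
      finally show ?thesis by simp
    qed
    also have "(\<integral>x. indicator B x * Vt t x \<partial>M) / real T = (\<integral>x\<in>B. Vt t x / real T \<partial>M)"
      by (rule setint_div[symmetric])
    finally show "(\<integral>x\<in>B. S x \<partial>M) = (\<integral>x\<in>B. Vt t x / real T \<partial>M)" .
  next
    show "integrable M S" by (rule S_int)
    show "integrable M (\<lambda>x. Vt t x / real T)" using Vt_int[of t] t by auto
    show "(\<lambda>x. Vt t x / real T) \<in> borel_measurable (F t)" by measurable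
  qed
qed

lemma C1: "t < T \<Longrightarrow> AE \<omega> in M. real_cond_exp M (F t) S \<omega> = Vt t \<omega> / real T"
proof (induction "T - 1 - t" arbitrary: t)
  case 0
  then have "t = T - 1" by simp
  then show ?case using C1_base by simp
next
  case (Suc d)
  then have t1: "Suc t < T" and d: "d = T - 1 - Suc t" by auto
  have "AE \<omega> in M. real_cond_exp M (F (Suc t)) S \<omega> = Vt (Suc t) \<omega> / real T"
    using Suc.hyps(1)[OF d] t1 by simp
  then show ?case using C1_from_C2[OF t1 C2_from_C1[OF t1]] by simp
qed

lemma C2: "Suc t < T \<Longrightarrow> AE \<omega> in M. real_cond_exp M (Fh t) S \<omega> = Vh t \<omega> / real T"
  using C2_from_C1 C1 by blast

lemma diff1:
  assumes t: "Suc t < T"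
  shows "AE \<omega> in M. real_cond_exp M (Fh t) S \<omega> - real_cond_exp M (F t) S \<omega>
     = (1 / real T) * (Sgh t (kernel_app K (H (Suc t))) \<omega> - Sg t (kernel_app K (H (Suc t))) \<omega>)"
proof -
  have t': "t < T" using t by simp
  show ?thesis using C1[OF t'] C2[OF t] VhVt[OF t']
    by eventually_elim (auto simp: diff_divide_distrib add_divide_distrib)
qed

lemma diff2:
  assumes t: "Suc t < T"
  shows "AE \<omega> in M. real_cond_exp M (F (Suc t)) S \<omega> - real_cond_exp M (Fh t) S \<omega>
     = (1 / real T) * (Sg (Suc t) (H (Suc t)) \<omega> - Sgh t (kernel_app K (H (Suc t))) \<omega>)"
  using C1[OF t] C2[OF t]
  by eventually_elim (auto simp: diff_divide_distrib add_divide_distrib VtVh)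

lemma mart: "martingale_upto M (\<lambda>k. if even k then F (k div 2) else Fh (k div 2))
    (\<lambda>k. if even k then real_cond_exp M (F (k div 2)) S else real_cond_exp M (Fh (k div 2)) S) n"
proof -
  let ?G = "\<lambda>k. if even k then F (k div 2) else Fh (k div 2)"
  have subG: "subalgebra M (?G k)" for k using subF subFh by auto
  have subGG: "subalgebra (?G (Suc k)) (?G k)" for k
    by (cases "even k") (auto simp: subFhF subFFh)
  have sfG: "sigma_finite_subalgebra M (?G k)" for k by (rule sfs_of_prob[OF M subG])
  have ceq: "(if even k then real_cond_exp M (F (k div 2)) S else real_cond_exp M (Fh (k div 2)) S)
      = real_cond_exp M (?G k) S" for k by simp
  show ?thesis
    unfolding martingale_upto_def ceq
  proof (intro conjI allI impI)
    fix k
    show "subalgebra M (?G k)" by (rule subG)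
    show "subalgebra (?G (Suc k)) (?G k)" by (rule subGG)
    interpret SG: sigma_finite_subalgebra M "?G k" by (rule sfG)
    show "integrable M (real_cond_exp M (?G k) S)" by (rule SG.real_cond_exp_int(1)[OF S_int])
    show "real_cond_exp M (?G k) S \<in> borel_measurable (?G k)" by (rule borel_measurable_cond_exp)
    show "AE \<omega> in M. real_cond_exp M (?G k) (real_cond_exp M (?G (Suc k)) S) \<omega> = real_cond_exp M (?G k) S \<omega>"
      by (rule SG.real_cond_exp_nested_subalg[OF subG subGG S_int])
  qed
qed

end

theorem mainTheorem7:
  fixes M :: "'a measure" and X :: "'x measure" and K :: "'x \<Rightarrow> 'x measure"
    and \<mu> \<mu>0 :: "'x measure" and N T :: nat
    and F Fh :: "nat \<Rightarrow> 'a measure"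
    and xi xih :: "nat \<Rightarrow> nat \<Rightarrow> 'a \<Rightarrow> 'x" and w wh C :: "nat \<Rightarrow> nat \<Rightarrow> 'a \<Rightarrow> real"
    and Nsp par bin Nb :: "nat \<Rightarrow> nat \<Rightarrow> 'a \<Rightarrow> nat"
    and f :: "'x \<Rightarrow> real"
  assumes M: "prob_space M"
    and K: "K \<in> X \<rightarrow>\<^sub>M prob_algebra X"
    and mu: "prob_space \<mu>" "sets \<mu> = sets X" "\<mu> \<bind> K = \<mu>"
    and mu0: "prob_space \<mu>0" "sets \<mu>0 = sets X"
    and N: "N \<ge> 1"
    and WE: "WE_method M X K \<mu>0 N F Fh xi w xih wh C Nsp par bin Nb"
    and T: "T \<ge> 1"
    and f: "f \<in> borel_measurable X"
    and f_int: "\<And>t. t \<le> T - 1 \<Longrightarrow> (\<integral>\<^sup>+ x. ennreal \<bar>f x\<bar> \<partial>(meas_kpow \<mu>0 K t)) < \<infinity>"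
    and f_mu: "(\<integral>\<^sup>+ x. ennreal \<bar>f x\<bar> \<partial>\<mu>) < \<infinity>"
  defines "S \<equiv> (\<lambda>\<omega>. (1 / real T) * (\<Sum>s<T. \<Sum>i<N. w s i \<omega> * f (xi s i \<omega>)))"
  defines "Y \<equiv> (\<lambda>t. real_cond_exp M (F t) S)"
    and "Yh \<equiv> (\<lambda>t. real_cond_exp M (Fh t) S)"
  shows "martingale_upto M (\<lambda>k. if even k then F (k div 2) else Fh (k div 2))
           (\<lambda>k. if even k then Y (k div 2) else Yh (k div 2)) (2 * (T - 1))
     \<and> (\<forall>t. t + 2 \<le> T \<longrightarrow>
           (AE \<omega> in M. Yh t \<omega> - Y t \<omega> =
              (1 / real T) * ((\<Sum>i<N. wh t i \<omega> * kernel_app K (hT K \<mu> f T (Suc t)) (xih t i \<omega>))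
                            - (\<Sum>i<N. w t i \<omega> * kernel_app K (hT K \<mu> f T (Suc t)) (xi t i \<omega>)))))
     \<and> (\<forall>t. t + 2 \<le> T \<longrightarrow>
           (AE \<omega> in M. Y (Suc t) \<omega> - Yh t \<omega> =
              (1 / real T) * (\<Sum>i<N. wh t i \<omega> *
                 (hT K \<mu> f T (Suc t) (xi (Suc t) i \<omega>) - kernel_app K (hT K \<mu> f T (Suc t)) (xih t i \<omega>)))))"
proof -
  interpret W: WEL2 M X K \<mu>0 N F Fh xi xih w wh C Nsp par bin Nb \<mu> f T
    by (rule WEL2.intro[OF WEL.intro[OF M K mu0(1) mu0(2) N WE] WEL2_axioms.intro[OF f mu(2) f_int T]])
  have Seq: "S = W.S" unfolding S_def W.S_def ..
  have Heq: "\<And>t. hT K \<mu> f T t = W.H t" unfolding W.H_def ..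
  have part1: "martingale_upto M (\<lambda>k. if even k then F (k div 2) else Fh (k div 2))
           (\<lambda>k. if even k then Y (k div 2) else Yh (k div 2)) (2 * (T - 1))"
    unfolding Y_def Yh_def Seq by (rule W.mart)
  have part2: "AE \<omega> in M. Yh t \<omega> - Y t \<omega> =
              (1 / real T) * ((\<Sum>i<N. wh t i \<omega> * kernel_app K (hT K \<mu> f T (Suc t)) (xih t i \<omega>))
                            - (\<Sum>i<N. w t i \<omega> * kernel_app K (hT K \<mu> f T (Suc t)) (xi t i \<omega>)))"
    if t: "t + 2 \<le> T" for t
    using W.diff1[of t] t unfolding Y_def Yh_def Seq Heq W.Sg_def W.Sgh_def by simp
  have part3: "AE \<omega> in M. Y (Suc t) \<omega> - Yh t \<omega> =
              (1 / real T) * (\<Sum>i<N. wh t i \<omega> *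
                 (hT K \<mu> f T (Suc t) (xi (Suc t) i \<omega>) - kernel_app K (hT K \<mu> f T (Suc t)) (xih t i \<omega>)))"
    if t: "t + 2 \<le> T" for t
  proof -
    have t1: "Suc t < T" using t by simp
    have "AE \<omega> in M. \<omega> \<in> space M" by simp
    with W.diff2[OF t1] show ?thesis unfolding Y_def Yh_def Seq Heq
    proof eventually_elim
      case (elim \<omega>)
      have "W.Sg (Suc t) (W.H (Suc t)) \<omega> - W.Sgh t (kernel_app K (W.H (Suc t))) \<omega>
          = (\<Sum>i<N. wh t i \<omega> * (W.H (Suc t) (xi (Suc t) i \<omega>) - kernel_app K (W.H (Suc t)) (xih t i \<omega>)))"
        unfolding W.Sg_def W.Sgh_def using elim(2)
        by (simp add: W.w_Suc right_diff_distrib sum_subtractf)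
      then show ?case using elim(1) by simp
    qed
  qed
  show ?thesis using part1 part2 part3 by blast
qed


end
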